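(* Let $d\ge3$ and $\lambda\in\mathbb{R}$ be fixed, $p=(1+\lambda n^{-1/3})/(d-1)$, $dn$ even, and $A=A(n)=O(n^{1/6})$. Let $T'=\lceil n^{2/3}/A\rceil$, $T=(d-1)T'$, $L=\lfloor dn/(4T)\rfloor$, and for $B>0$ let $\mathcal{G}_{2L-1}=\{t_{2L-1}\le BLT^{1/2}\}$, where $(t_i)$ are the excursion end times of the stub exploration process described in the context. There exist constants $B_0=B_0(d)>0$ and $A_0=A_0(\lambda,d)>0$ such that for any $A\ge A_0$, $B\ge B_0$ and all sufficiently large $n$, \[\mathbb{P}(\mathcal{G}_{2L-1}^c)\le\exp(-cA^{3/2})\] for some constant $c=c(B)>0$.
   Context: Consider $dn$ stubs $(v,i)$, $v\in[n]$, $i\in[d]$; for a stub $h$ let $v(h)$ be its vertex and $\mathcal{S}(h)=\{(v(h),i):i\in[d]\}$. The following process simultaneously builds a uniformly random $d$-regular multigraph by the configuration model (uniform pairing of stubs) and performs independent $p$-bond percolation on it. Stubs are active, unseen or explored; $\mathcal{A}_t,\mathcal{U}_t,\mathcal{E}_t$ denote these sets after step $t$. Initially pick a uniform random vertex $V_n$; its $d$ stubs are active, all others unseen, $\mathcal{E}_0=\emptyset$. At step $t\ge1$: (a) if $|\mathcal{A}_{t-1}|\ge1$, choose (arbitrarily) an active stub $e_t$ and pair it with a stub $h_t$ chosen uniformly from all stubs not in $\mathcal{E}_{t-1}\cup\{e_t\}$; the edge $e_th_t$ is retained independently with probability $p$ (event $R_t$). (a.1) If $h_t\in\mathcal{U}_{t-1}$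 and $R_t$ occurs: $\mathcal{A}_t=(\mathcal{A}_{t-1}\setminus\{e_t\})\cup(\mathcal{U}_{t-1}\cap\mathcal{S}(h_t)\setminus\{h_t\})$, $\mathcal{U}_t=\mathcal{U}_{t-1}\setminus\mathcal{S}(h_t)$, $\mathcal{E}_t=\mathcal{E}_{t-1}\cup\{e_t,h_t\}$. (a.2) If $h_t\in\mathcal{U}_{t-1}$ and $R_t$ fails: $\mathcal{A}_t=\mathcal{A}_{t-1}\setminus\{e_t\}$, $\mathcal{U}_t=\mathcal{U}_{t-1}\setminus\{h_t\}$, $\mathcal{E}_t=\mathcal{E}_{t-1}\cup\{e_t,h_t\}$. (a.3) If $h_t\in\mathcal{A}_{t-1}$: $\mathcal{A}_t=\mathcal{A}_{t-1}\setminus\{e_t,h_t\}$, $\mathcal{U}_t=\mathcal{U}_{t-1}$, $\mathcal{E}_t=\mathcal{E}_{t-1}\cup\{e_t,h_t\}$. (b) If $|\mathcal{A}_{t-1}|=0$ and $|\mathcal{U}_{t-1}|\ge1$, pick (arbitrarily) an unseen stub $e_t$, declare active all unseen stubs of $\mathcal{S}(e_t)$, and proceed as in (a) with this $e_t$. (c) If both are empty, stop (after $dn/2$ steps). Let $Y_t=|\mathcal{A}_t|$, $t_0=0$, $t_i=\min\{t\ge t_{i-1}+1:Y_t=0\}$. The probability refers to this process (i.e. to percolation on the configuration-model multigraph). *)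

theory Defs
  imports "HOL-Probability.Probability" "HOL-Library.Landau_Symbols"
begin

text \<open>Stubs are pairs (v,i) with v < n, i < d. A state is the triple
 (active, unseen, explored) of stub sets.\<close>

type_synonym stub = "nat \<times> nat"
type_synonym expl_state = "stub set \<times> stub set \<times> stub set"

definition stubs :: "nat \<Rightarrow> nat \<Rightarrow> stub set" where
  "stubs n d = {..<n} \<times> {..<d}"

definition stub_sib :: "nat \<Rightarrow> stub \<Rightarrow> stub set" where
  "stub_sib d h = {fst h} \<times> {..<d}"

definition act_of :: "expl_state \<Rightarrow> stub set" where "act_of s = fst s"
definition uns_of :: "expl_state \<Rightarrow> stub set" where "uns_of s = fst (snd s)"
definition exp_of :: "expl_state \<Rightarrow> stub set" where "exp_of s = snd (snd s)"

definition init_state :: "nat \<Rightarrow> nat \<Rightarrow> nat \<Rightarrow> expl_state" where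
  "init_state n d V = (stub_sib d (V,0), stubs n d - stub_sib d (V,0), {})"

definition activate :: "nat \<Rightarrow> expl_state \<Rightarrow> stub \<Rightarrow> expl_state" where
  "activate d s e = (if act_of s = {}
      then (uns_of s \<inter> stub_sib d e, uns_of s - stub_sib d e, exp_of s) else s)"

text \<open>Cases (a.1)--(a.3) given e (active), the partner h and retention r.\<close>
definition upd_state :: "nat \<Rightarrow> expl_state \<Rightarrow> stub \<Rightarrow> stub \<Rightarrow> bool \<Rightarrow> expl_state" where
  "upd_state d s e h r =
     (let A = act_of s; U = uns_of s; E = exp_of s in
      if h \<in> U then
        (if r then ((A - {e}) \<union> (U \<inter> stub_sib d h - {h}), U - stub_sib d h, E \<union> {e, h})
         else (A - {e}, U - {h}, E \<union> {e, h}))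
      else (A - {e, h}, U, E \<union> {e, h}))"

definition expl_step :: "nat \<Rightarrow> nat \<Rightarrow> real \<Rightarrow> expl_state \<Rightarrow> stub \<Rightarrow> expl_state pmf" where
  "expl_step n d p s e =
     (if act_of s = {} \<and> uns_of s = {} then return_pmf s
      else (let s' = activate d s e in
        do { h \<leftarrow> pmf_of_set (stubs n d - (exp_of s' \<union> {e}));
             r \<leftarrow> bernoulli_pmf p;
             return_pmf (upd_state d s' e h r) }))"

text \<open>Law of the history (list of states after steps 0..t). The choice of e_t is made
 by an arbitrary rule sel depending on the whole history.\<close>
fun expl_traj :: "nat \<Rightarrow> nat \<Rightarrow> real \<Rightarrow> (expl_state list \<Rightarrow> stub) \<Rightarrow> nat \<Rightarrow> expl_state list pmf" where
  "expl_traj n d p sel 0 = map_pmf (\<lambda>V. [init_state n d V]) (pmf_of_set {..<n})"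
| "expl_traj n d p sel (Suc t) =
     bind_pmf (expl_traj n d p sel t)
       (\<lambda>xs. map_pmf (\<lambda>s. xs @ [s]) (expl_step n d p (last xs) (sel xs)))"

definition valid_sel :: "(expl_state list \<Rightarrow> stub) \<Rightarrow> bool" where
  "valid_sel sel \<longleftrightarrow> (\<forall>xs. (act_of (last xs) \<noteq> {} \<longrightarrow> sel xs \<in> act_of (last xs)) \<and>
       (act_of (last xs) = {} \<and> uns_of (last xs) \<noteq> {} \<longrightarrow> sel xs \<in> uns_of (last xs)))"

text \<open>Y_t = |A_t|; beyond the end of the history the (stopped) last state persists.\<close>
definition Yproc :: "expl_state list \<Rightarrow> nat \<Rightarrow> nat" where
  "Yproc xs t = card (act_of (if t < length xs then xs ! t else last xs))"

fun exc_time :: "(nat \<Rightarrow> nat) \<Rightarrow> nat \<Rightarrow> nat" where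
  "exc_time Y 0 = 0"
| "exc_time Y (Suc i) = (LEAST t. t \<ge> exc_time Y i + 1 \<and> Y t = 0)"

definition expl_process :: "nat \<Rightarrow> nat \<Rightarrow> real \<Rightarrow> (expl_state list \<Rightarrow> stub) \<Rightarrow> expl_state list pmf" where
  "expl_process n d p sel = expl_traj n d p sel (d * n div 2)"

definition perc_p :: "nat \<Rightarrow> real \<Rightarrow> nat \<Rightarrow> real" where
  "perc_p d lam n = (1 + lam * real n powr (-1/3)) / (real d - 1)"

definition T'_par :: "real \<Rightarrow> nat \<Rightarrow> nat" where
  "T'_par A n = nat \<lceil>real n powr (2/3) / A\<rceil>"

definition T_par :: "nat \<Rightarrow> real \<Rightarrow> nat \<Rightarrow> nat" where
  "T_par d A n = (d - 1) * T'_par A n"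

definition L_par :: "nat \<Rightarrow> real \<Rightarrow> nat \<Rightarrow> nat" where
  "L_par d A n = nat \<lfloor>real (d * n) / (4 * real (T_par d A n))\<rfloor>"

definition G_event :: "nat \<Rightarrow> real \<Rightarrow> real \<Rightarrow> nat \<Rightarrow> expl_state list set" where
  "G_event d A B n = {xs. real (exc_time (Yproc xs) (2 * L_par d A n - 1))
        \<le> B * real (L_par d A n) * sqrt (real (T_par d A n))}"

end

theory Submission
  imports Defs
begin


lemma sib_mem: "x \<in> stub_sib d h \<longleftrightarrow> fst x = fst h \<and> snd x < d"
  by (cases x) (auto simp: stub_sib_def)

lemma stubs_mem: "x \<in> stubs n d \<longleftrightarrow> fst x < n \<and> snd x < d"
  by (cases x) (auto simp: stubs_def)

lemma finite_sib[simp]: "finite (stub_sib d h)"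
  by (simp add: stub_sib_def)

lemma card_sib[simp]: "card (stub_sib d h) = d"
  by (simp add: stub_sib_def card_cartesian_product)

lemma finite_stubs[simp]: "finite (stubs n d)"
  by (simp add: stubs_def)

lemma card_stubs[simp]: "card (stubs n d) = n * d"
  by (simp add: stubs_def card_cartesian_product)

lemma sib_self: "h \<in> stubs n d \<Longrightarrow> h \<in> stub_sib d h"
  by (simp add: sib_mem stubs_mem)

lemma sib_sub: "h \<in> stubs n d \<Longrightarrow> stub_sib d h \<subseteq> stubs n d"
  by (auto simp: sib_mem stubs_mem)

lemma sib_eq: "x \<in> stub_sib d h \<Longrightarrow> stub_sib d x = stub_sib d h"
  by (auto simp: stub_sib_def)

definition UPs :: "nat \<Rightarrow> stub set \<Rightarrow> stub set" where
  "UPs d U = {x\<in>U. \<not> stub_sib d x \<subseteq> U}"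

lemma UPs_sub: "UPs d U \<subseteq> U" by (auto simp: UPs_def)

lemma sib_disj: "snd x < d \<Longrightarrow> x \<notin> stub_sib d h \<Longrightarrow> stub_sib d x \<inter> stub_sib d h = {}"
  by (auto simp: sib_mem)

lemma UPs_minus_sib:
  assumes "U \<subseteq> stubs n d"
  shows "UPs d (U - stub_sib d h) = UPs d U - stub_sib d h"
proof -
  have "stub_sib d x \<subseteq> U - stub_sib d h \<longleftrightarrow> stub_sib d x \<subseteq> U" if "x \<in> U" "x \<notin> stub_sib d h" for x
  proof -
    have "snd x < d" using that assms by (auto simp: stubs_mem)
    then have "stub_sib d x \<inter> stub_sib d h = {}" using sib_disj that by blast
    then show ?thesis by blast
  qed
  then show ?thesis unfolding UPs_def by blast
qed

lemma UPs_fresh_disj: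
  assumes "stub_sib d h \<subseteq> U"
  shows "UPs d U \<inter> stub_sib d h = {}"
proof -
  { fix x assume "x \<in> stub_sib d h" then have "stub_sib d x \<subseteq> U" using sib_eq[of x d h] assms by simp }
  then show ?thesis unfolding UPs_def by blast
qed

lemma UPs_minus_fresh:
  assumes "U \<subseteq> stubs n d" "h \<in> U" "stub_sib d h \<subseteq> U"
  shows "UPs d (U - {h}) = UPs d U \<union> (stub_sib d h - {h})"
proof -
  have hs: "h \<in> stub_sib d h" using assms sib_self by blast
  have A: "x \<in> UPs d (U - {h})" if "x \<in> stub_sib d h - {h}" for x
  proof -
    have "stub_sib d x = stub_sib d h" using that sib_eq[of x d h] by blast
    then have "\<not> stub_sib d x \<subseteq> U - {h}" using hs by blast
    moreover have "x \<in> U - {h}" using that assms(3) by blast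
    ultimately show ?thesis unfolding UPs_def by blast
  qed
  have B: "x \<in> UPs d (U - {h}) \<longleftrightarrow> x \<in> UPs d U" if "x \<in> U" "x \<notin> stub_sib d h" for x
  proof -
    have "snd x < d" using that assms by (auto simp: stubs_mem)
    then have "stub_sib d x \<inter> stub_sib d h = {}" using sib_disj that by blast
    then have "h \<notin> stub_sib d x" using hs by blast
    moreover have "x \<noteq> h" using that hs by blast
    ultimately show ?thesis using that unfolding UPs_def by blast
  qed
  show ?thesis
  proof (intro equalityI subsetI)
    fix x assume x: "x \<in> UPs d (U - {h})"
    then have "x \<in> U" "x \<noteq> h" by (auto simp: UPs_def)
    then show "x \<in> UPs d U \<union> (stub_sib d h - {h})" using B x by blast
  next
    fix x assume x: "x \<in> UPs d U \<union> (stub_sib d h - {h})"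
    then show "x \<in> UPs d (U - {h})"
    proof
      assume "x \<in> UPs d U"
      then have "x \<in> U" "x \<notin> stub_sib d h" using UPs_fresh_disj[OF assms(3)] by (auto simp: UPs_def)
      then show ?thesis using B \<open>x \<in> UPs d U\<close> by blast
    qed (use A in blast)
  qed
qed

lemma UPs_minus_partial:
  assumes "U \<subseteq> stubs n d" "h \<in> U" "\<not> stub_sib d h \<subseteq> U"
  shows "UPs d (U - {h}) = UPs d U - {h}"
proof -
  have hs: "h \<in> stub_sib d h" using assms sib_self by blast
  have B: "x \<in> UPs d (U - {h}) \<longleftrightarrow> x \<in> UPs d U" if "x \<in> U" "x \<noteq> h" for x
  proof (cases "x \<in> stub_sib d h")
    case True
    then have "stub_sib d x = stub_sib d h" by (rule sib_eq)
    then show ?thesis using that assms hs by (auto simp: UPs_def)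
  next
    case False
    have "snd x < d" using that assms by (auto simp: stubs_mem)
    then have "stub_sib d x \<inter> stub_sib d h = {}" using sib_disj False by blast
    then have "h \<notin> stub_sib d x" using hs by blast
    then show ?thesis using that by (auto simp: UPs_def)
  qed
  show ?thesis using B by (auto simp: UPs_def)
qed



lemma act_of_simp[simp]: "act_of (a,b,c) = a" by (simp add: act_of_def)
lemma uns_of_simp[simp]: "uns_of (a,b,c) = b" by (simp add: uns_of_def)
lemma exp_of_simp[simp]: "exp_of (a,b,c) = c" by (simp add: exp_of_def)
lemma upd_UT: "h \<in> U \<Longrightarrow> upd_state d (A,U,E) e h True = ((A - {e}) \<union> (U \<inter> stub_sib d h - {h}), U - stub_sib d h, E \<union> {e,h})"
  unfolding upd_state_def Let_def by simp
lemma upd_UF: "h \<in> U \<Longrightarrow> upd_state d (A,U,E) e h False = (A - {e}, U - {h}, E \<union> {e,h})"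
  unfolding upd_state_def Let_def by simp
lemma upd_A: "h \<notin> U \<Longrightarrow> upd_state d (A,U,E) e h r = (A - {e,h}, U, E \<union> {e,h})"
  unfolding upd_state_def Let_def by simp

locale stepctx =
  fixes n d :: nat and A U E :: "stub set" and e h :: stub
  assumes AU: "A \<inter> U = {}" and eA: "e \<in> A" and hS: "h \<in> (A \<union> U) - {e}"
    and Us: "U \<subseteq> stubs n d" and As: "A \<subseteq> stubs n d"
begin

lemma finA: "finite A" by (rule finite_subset[OF As]) simp
lemma finU: "finite U" by (rule finite_subset[OF Us]) simp
lemma hstub: "h \<in> stubs n d" using hS As Us by blast
lemma hsib: "h \<in> stub_sib d h" using sib_self hstub by blast
lemma cardA1: "card A \<ge> 1" using eA finA card_gt_0_iff[of A] by auto

lemma case_fresh_T: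
  assumes "h \<in> U" "stub_sib d h \<subseteq> U"
  shows "real (card (act_of (upd_state d (A,U,E) e h True))) = real (card A) + d - 2"
    "card (UPs d (uns_of (upd_state d (A,U,E) e h True))) = card (UPs d U)"
proof -
  have eq: "act_of (upd_state d (A,U,E) e h True) = (A - {e}) \<union> (stub_sib d h - {h})"
    using assms by (simp add: upd_UT Int_absorb1)
  have disj: "(A - {e}) \<inter> (stub_sib d h - {h}) = {}" using AU assms by blast
  have "card ((A - {e}) \<union> (stub_sib d h - {h})) = card (A - {e}) + card (stub_sib d h - {h})"
    using card_Un_disjoint[OF _ _ disj] finA by simp
  moreover have "card (A - {e}) = card A - 1" using eA finA by simp
  moreover have "card (stub_sib d h - {h}) = d - 1" using hsib by simp
  moreover have "d \<ge> 1" using hsib by (auto simp: sib_mem)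
  ultimately show "real (card (act_of (upd_state d (A,U,E) e h True))) = real (card A) + d - 2"
    using eq cardA1 by (simp add: of_nat_diff)
  have "uns_of (upd_state d (A,U,E) e h True) = U - stub_sib d h"
    using assms by (simp add: upd_UT upd_UF)
  then have "UPs d (uns_of (upd_state d (A,U,E) e h True)) = UPs d U - stub_sib d h"
    using UPs_minus_sib[OF Us] by simp
  also have "\<dots> = UPs d U" using UPs_fresh_disj[OF assms(2)] by blast
  finally show "card (UPs d (uns_of (upd_state d (A,U,E) e h True))) = card (UPs d U)" by simp
qed

lemma case_fresh_F:
  assumes "h \<in> U" "stub_sib d h \<subseteq> U"
  shows "real (card (act_of (upd_state d (A,U,E) e h False))) = real (card A) - 1"
    "real (card (UPs d (uns_of (upd_state d (A,U,E) e h False)))) = real (card (UPs d U)) + d - 1"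
proof -
  have "act_of (upd_state d (A,U,E) e h False) = A - {e}"
    using assms by (simp add: upd_UT upd_UF)
  then show "real (card (act_of (upd_state d (A,U,E) e h False))) = real (card A) - 1"
    using eA finA cardA1 by (simp add: of_nat_diff)
  have "uns_of (upd_state d (A,U,E) e h False) = U - {h}"
    using assms by (simp add: upd_UT upd_UF)
  then have eq: "UPs d (uns_of (upd_state d (A,U,E) e h False)) = UPs d U \<union> (stub_sib d h - {h})"
    using UPs_minus_fresh[OF Us assms] by simp
  have disj: "UPs d U \<inter> (stub_sib d h - {h}) = {}" using UPs_fresh_disj[OF assms(2)] by blast
  have finP: "finite (UPs d U)" using finU UPs_sub by (rule finite_subset[rotated])
  have "card (UPs d U \<union> (stub_sib d h - {h})) = card (UPs d U) + (d - 1)"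
    using card_Un_disjoint[OF finP _ disj] hsib by simp
  moreover have "d \<ge> 1" using hsib by (auto simp: sib_mem)
  ultimately show "real (card (UPs d (uns_of (upd_state d (A,U,E) e h False)))) = real (card (UPs d U)) + d - 1"
    using eq by (simp add: of_nat_diff)
qed

lemma case_part_T:
  assumes "h \<in> U" "\<not> stub_sib d h \<subseteq> U"
  shows "real (card (act_of (upd_state d (A,U,E) e h True))) \<le> real (card A) + d - 3"
    "real (card (act_of (upd_state d (A,U,E) e h True))) \<ge> real (card A) - 1"
    "real (card (UPs d (uns_of (upd_state d (A,U,E) e h True)))) \<le> real (card (UPs d U))"
    "real (card (UPs d (uns_of (upd_state d (A,U,E) e h True)))) \<ge> real (card (UPs d U)) - d"
proof -
  have eq: "act_of (upd_state d (A,U,E) e h True) = (A - {e}) \<union> (U \<inter> stub_sib d h - {h})"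
    using assms by (simp add: upd_UT upd_UF)
  have disj: "(A - {e}) \<inter> (U \<inter> stub_sib d h - {h}) = {}" using AU assms by blast
  have c: "card ((A - {e}) \<union> (U \<inter> stub_sib d h - {h})) = card (A - {e}) + card (U \<inter> stub_sib d h - {h})"
    using card_Un_disjoint[OF _ _ disj] finA by simp
  have cA: "card (A - {e}) = card A - 1" using eA finA by simp
  have psub: "U \<inter> stub_sib d h \<subset> stub_sib d h" using assms by blast
  have lt: "card (U \<inter> stub_sib d h) < d" using psubset_card_mono[OF finite_sib psub] by simp
  have hin: "h \<in> U \<inter> stub_sib d h" using assms hsib by blast
  have fI: "finite (U \<inter> stub_sib d h)" by simp
  have "card (U \<inter> stub_sib d h - {h}) = card (U \<inter> stub_sib d h) - 1"
    using card_Diff_singleton[OF hin] .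
  moreover have "card (U \<inter> stub_sib d h) \<ge> 1" using hin fI card_gt_0_iff[of "U \<inter> stub_sib d h"] by auto
  ultimately have c2: "card (U \<inter> stub_sib d h - {h}) + 2 \<le> d" using lt by linarith
  show "real (card (act_of (upd_state d (A,U,E) e h True))) \<le> real (card A) + d - 3"
    using eq c cA c2 cardA1 by (simp add: of_nat_diff)
  show "real (card (act_of (upd_state d (A,U,E) e h True))) \<ge> real (card A) - 1"
    using eq c cA cardA1 by (simp add: of_nat_diff)
  have "uns_of (upd_state d (A,U,E) e h True) = U - stub_sib d h"
    using assms by (simp add: upd_UT upd_UF)
  then have eq2: "UPs d (uns_of (upd_state d (A,U,E) e h True)) = UPs d U - stub_sib d h"
    using UPs_minus_sib[OF Us] by simp
  have finP: "finite (UPs d U)" using finU UPs_sub by (rule finite_subset[rotated])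
  show "real (card (UPs d (uns_of (upd_state d (A,U,E) e h True)))) \<le> real (card (UPs d U))"
    unfolding eq2 using card_mono[OF finP, of "UPs d U - stub_sib d h"] by simp
  have "card (UPs d U) - card (stub_sib d h) \<le> card (UPs d U - stub_sib d h)"
    by (rule diff_card_le_card_Diff) simp
  then show "real (card (UPs d (uns_of (upd_state d (A,U,E) e h True)))) \<ge> real (card (UPs d U)) - d"
    unfolding eq2 by simp
qed

lemma case_part_F:
  assumes "h \<in> U" "\<not> stub_sib d h \<subseteq> U"
  shows "real (card (act_of (upd_state d (A,U,E) e h False))) = real (card A) - 1"
    "real (card (UPs d (uns_of (upd_state d (A,U,E) e h False)))) = real (card (UPs d U)) - 1"
proof -
  have "act_of (upd_state d (A,U,E) e h False) = A - {e}"
    using assms by (simp add: upd_UT upd_UF)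
  then show "real (card (act_of (upd_state d (A,U,E) e h False))) = real (card A) - 1"
    using eA finA cardA1 by (simp add: of_nat_diff)
  have "uns_of (upd_state d (A,U,E) e h False) = U - {h}"
    using assms by (simp add: upd_UT upd_UF)
  then have eq: "UPs d (uns_of (upd_state d (A,U,E) e h False)) = UPs d U - {h}"
    using UPs_minus_partial[OF Us assms] by simp
  have "h \<in> UPs d U" using assms by (simp add: UPs_def)
  moreover have finP: "finite (UPs d U)" using finU UPs_sub by (rule finite_subset[rotated])
  ultimately have "card (UPs d U - {h}) = card (UPs d U) - 1" "card (UPs d U) \<ge> 1"
    using card_Diff_singleton[of h "UPs d U"] card_gt_0_iff[of "UPs d U"] by auto
  then show "real (card (UPs d (uns_of (upd_state d (A,U,E) e h False)))) = real (card (UPs d U)) - 1"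
    using eq by (simp add: of_nat_diff)
qed

lemma case_act:
  assumes "h \<in> A"
  shows "real (card (act_of (upd_state d (A,U,E) e h r))) = real (card A) - 2"
    "card (UPs d (uns_of (upd_state d (A,U,E) e h r))) = card (UPs d U)"
proof -
  have hU: "h \<notin> U" using assms AU by blast
  have eq: "act_of (upd_state d (A,U,E) e h r) = A - {e,h}"
    using upd_A[OF hU] by simp
  have "h \<noteq> e" using hS by blast
  have sub: "{e,h} \<subseteq> A" using eA assms by blast
  have "card (A - {e,h}) = card A - card {e,h}" using card_Diff_subset[OF _ sub] by simp
  moreover have "card {e,h} = 2" using \<open>h \<noteq> e\<close> by simp
  moreover have "card {e,h} \<le> card A" using card_mono[OF finA sub] .
  ultimately show "real (card (act_of (upd_state d (A,U,E) e h r))) = real (card A) - 2"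
    using eq by (simp add: of_nat_diff)
  have "uns_of (upd_state d (A,U,E) e h r) = U"
    using upd_A[OF hU] by simp
  then show "card (UPs d (uns_of (upd_state d (A,U,E) e h r))) = card (UPs d U)" by simp
qed

end


definition D13 :: "nat \<Rightarrow> stub set \<Rightarrow> stub set \<Rightarrow> stub set \<Rightarrow> stub \<Rightarrow> real \<Rightarrow> stub \<Rightarrow> bool \<Rightarrow> real" where
  "D13 d A U E e G h r = real (card (act_of (upd_state d (A,U,E) e h r))) - real (card A)
     - G * (real (card (UPs d (uns_of (upd_state d (A,U,E) e h r)))) - real (card (UPs d U)))"

context stepctx begin

lemma D13_bound:
  assumes G0: "0 \<le> G" and G1: "G \<le> 1" and d3: "d \<ge> 3"
  shows "\<bar>D13 d A U E e G h r\<bar> \<le> 2 * real d"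
proof -
  let ?a = "real (card (act_of (upd_state d (A,U,E) e h r))) - real (card A)"
  let ?q = "real (card (UPs d (uns_of (upd_state d (A,U,E) e h r)))) - real (card (UPs d U))"
  have d1: "real d \<ge> 1" using hsib by (auto simp: sib_mem)
  have "\<bar>?a\<bar> \<le> real d \<and> \<bar>?q\<bar> \<le> real d"
  proof (cases "h \<in> U")
    case True
    show ?thesis
    proof (cases "stub_sib d h \<subseteq> U")
      case fr: True
      show ?thesis using case_fresh_T[OF True fr] case_fresh_F[OF True fr] d1 by (cases r) auto
    next
      case pa: False
      show ?thesis using case_part_T[OF True pa] case_part_F[OF True pa] d1 by (cases r) auto
    qed
  next
    case False
    then have "h \<in> A" using hS by blast
    then show ?thesis using case_act[OF \<open>h \<in> A\<close>, of r] d3 by auto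
  qed
  then have qb: "\<bar>?q\<bar> \<le> real d" by blast
  have "G * \<bar>?q\<bar> \<le> 1 * real d" by (rule mult_mono[OF G1 qb]) auto
  then have "\<bar>G * ?q\<bar> \<le> 1 * real d" using G0 by (simp add: abs_mult)
  then show ?thesis unfolding D13_def using \<open>\<bar>?a\<bar> \<le> real d \<and> \<bar>?q\<bar> \<le> real d\<close> by linarith
qed

lemma D13_mean:
  assumes p0: "0 \<le> p" and p1: "p \<le> 1"
    and pe: "p * (real d - 1) - 1 \<le> eps0"
    and q1: "(1 - p) * (real d - 1) \<ge> 1/2"
    and q2: "p * (real d - 2) - 1 \<le> - 1 / (2 * (real d - 1))"
    and G0: "0 \<le> G" and Gs: "(real d + 1/2) * G \<le> 1 / (4 * (real d - 1))"
    and e0: "0 \<le> eps0" and d3: "d \<ge> 3"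
  shows "p * D13 d A U E e G h True + (1 - p) * D13 d A U E e G h False
     \<le> eps0 - G/2 - (if h \<in> UPs d U then 1 / (4 * (real d - 1)) else 0)"
proof -
  have dpos: "real d - 1 > 0" using d3 by simp
  have Gle: "G \<le> 1"
  proof -
    have "1 / (4 * (real d - 1)) \<le> 1" using d3 by (simp add: field_simps)
    moreover have "G \<le> (real d + 1/2) * G" using G0 d3 by (simp add: mult_le_cancel_right1)
    ultimately show ?thesis using Gs by linarith
  qed
  show ?thesis
  proof (cases "h \<in> U")
    case True
    show ?thesis
    proof (cases "stub_sib d h \<subseteq> U")
      case fr: True
      have nP: "h \<notin> UPs d U" using fr by (simp add: UPs_def)
      have T: "D13 d A U E e G h True = real d - 2"
        using case_fresh_T[OF True fr] by (simp add: D13_def)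
      have F: "D13 d A U E e G h False = -1 - G * (real d - 1)"
      proof -
        have "real (card (UPs d (uns_of (upd_state d (A,U,E) e h False)))) - real (card (UPs d U)) = real d - 1"
          using case_fresh_F(2)[OF True fr] by simp
        then show ?thesis using case_fresh_F(1)[OF True fr] unfolding D13_def by simp
      qed
      have "G * ((1 - p) * (real d - 1)) \<ge> G * (1/2)" using q1 G0 by (rule mult_left_mono)
      moreover have "p * D13 d A U E e G h True + (1 - p) * D13 d A U E e G h False
          = p * (real d - 1) - 1 - G * ((1 - p) * (real d - 1))" by (simp add: T F algebra_simps)
      ultimately show ?thesis using nP pe by simp
    next
      case pa: False
      have iP: "h \<in> UPs d U" using pa True by (simp add: UPs_def)
      note c = case_part_T[OF True pa]
      have T: "D13 d A U E e G h True \<le> real d - 3 + G * real d"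
      proof -
        have "- G * (real (card (UPs d (uns_of (upd_state d (A,U,E) e h True)))) - real (card (UPs d U))) \<le> G * real d"
        proof -
          have "G * (real (card (UPs d U)) - real (card (UPs d (uns_of (upd_state d (A,U,E) e h True))))) \<le> G * real d"
            using c(4) G0 by (intro mult_left_mono) auto
          then show ?thesis by (simp add: algebra_simps)
        qed
        then show ?thesis using c(1) unfolding D13_def by linarith
      qed
      have F: "D13 d A U E e G h False = -1 + G"
      proof -
        have "real (card (UPs d (uns_of (upd_state d (A,U,E) e h False)))) - real (card (UPs d U)) = - 1"
          using case_part_F(2)[OF True pa] by simp
        then show ?thesis using case_part_F(1)[OF True pa] unfolding D13_def by simp
      qed
      have a1: "p * D13 d A U E e G h True \<le> p * (real d - 3) + p * (G * real d)"
        using mult_left_mono[OF T p0] by (simp add: distrib_left)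
      have a2: "(1 - p) * D13 d A U E e G h False = - (1 - p) + (1 - p) * G" by (simp add: F algebra_simps)
      have a3: "p * (G * real d) + (1 - p) * G \<le> G * real d"
      proof -
        have "p * (G * real d) + (1 - p) * G = G * (p * (real d - 1) + 1)" by (simp add: algebra_simps)
        also have "\<dots> \<le> G * real d"
        proof -
          have "p * (real d - 1) \<le> 1 * (real d - 1)" using p1 dpos by (intro mult_right_mono) auto
          then show ?thesis using G0 by (intro mult_left_mono) auto
        qed
        finally show ?thesis .
      qed
      have a4: "p * (real d - 3) - (1 - p) = p * (real d - 2) - 1" by (simp add: algebra_simps)
      have "p * D13 d A U E e G h True + (1 - p) * D13 d A U E e G h False
          \<le> - 1 / (2 * (real d - 1)) + G * real d"
        using a1 a2 a3 a4 q2 by linarith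
      moreover have "- 1 / (2 * (real d - 1)) + G * real d \<le> eps0 - G/2 - 1 / (4 * (real d - 1))"
      proof -
        have "1 / (2 * (real d - 1)) = 2 * (1 / (4 * (real d - 1)))" using dpos by (simp add: field_simps)
        then show ?thesis using Gs e0 by (simp add: algebra_simps)
      qed
      ultimately show ?thesis using iP by simp
    qed
  next
    case False
    then have hA: "h \<in> A" using hS by blast
    have nP: "h \<notin> UPs d U" using False by (simp add: UPs_def)
    have "D13 d A U E e G h r = -2" for r
      using case_act[OF hA, of r] by (simp add: D13_def)
    then show ?thesis using nP Gle e0 by (simp add: algebra_simps)
  qed
qed

end


lemma nn_step_formula:
  fixes F :: "'b \<Rightarrow> real"
  assumes S: "finite S" "S \<noteq> {}" and p: "0 \<le> p" "p \<le> 1" and F0: "\<And>x. F x \<ge> 0"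
  shows "(\<integral>\<^sup>+x. ennreal (F x) \<partial>(bind_pmf (pmf_of_set S) (\<lambda>h. bind_pmf (bernoulli_pmf p) (\<lambda>r. return_pmf (k h r)))))
     = ennreal ((\<Sum>h\<in>S. p * F (k h True) + (1 - p) * F (k h False)) / real (card S))"
proof -
  have "(\<integral>\<^sup>+x. ennreal (F x) \<partial>(bind_pmf (pmf_of_set S) (\<lambda>h. bind_pmf (bernoulli_pmf p) (\<lambda>r. return_pmf (k h r)))))
     = (\<integral>\<^sup>+h. ennreal (p * F (k h True) + (1 - p) * F (k h False)) \<partial>pmf_of_set S)"
  proof -
    have eq: "ennreal (F (k h True)) * ennreal p + ennreal (F (k h False)) * ennreal (1 - p)
        = ennreal (p * F (k h True) + (1 - p) * F (k h False))" for h
    proof -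
      have a: "0 \<le> F (k h True)" "0 \<le> F (k h False)" "0 \<le> 1 - p" using F0 p by auto
      have "ennreal (p * F (k h True) + (1 - p) * F (k h False)) = ennreal (p * F (k h True)) + ennreal ((1 - p) * F (k h False))"
        by (rule ennreal_plus) (use a p in auto)
      also have "\<dots> = ennreal p * ennreal (F (k h True)) + ennreal (1 - p) * ennreal (F (k h False))"
        using a p by (simp only: ennreal_mult)
      finally show ?thesis by (simp add: mult.commute)
    qed
    show ?thesis using p F0 by (simp add: eq)
  qed
  also have "\<dots> = (\<Sum>h\<in>S. ennreal (p * F (k h True) + (1 - p) * F (k h False))) / card S"
    using S by (simp add: nn_integral_pmf_of_set)
  also have "\<dots> = ennreal (\<Sum>h\<in>S. p * F (k h True) + (1 - p) * F (k h False)) / ennreal (real (card S))"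
    using p F0 by (subst sum_ennreal) (auto intro!: add_nonneg_nonneg mult_nonneg_nonneg simp: ennreal_of_nat_eq_real_of_nat)
  also have "\<dots> = ennreal ((\<Sum>h\<in>S. p * F (k h True) + (1 - p) * F (k h False)) / real (card S))"
    using S by (subst divide_ennreal) (auto simp: card_gt_0_iff intro!: sum_nonneg add_nonneg_nonneg mult_nonneg_nonneg p F0)
  finally show ?thesis .
qed



definition partn :: "nat \<Rightarrow> nat \<Rightarrow> expl_state \<Rightarrow> bool" where
  "partn n d s \<longleftrightarrow> act_of s \<inter> uns_of s = {} \<and> act_of s \<inter> exp_of s = {} \<and> uns_of s \<inter> exp_of s = {}
     \<and> act_of s \<union> uns_of s \<union> exp_of s = stubs n d"

definition inv :: "nat \<Rightarrow> nat \<Rightarrow> nat \<Rightarrow> expl_state \<Rightarrow> bool" where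
  "inv n d t s \<longleftrightarrow> partn n d s \<and> card (exp_of s) = 2 * t"

definition validE :: "expl_state \<Rightarrow> stub \<Rightarrow> bool" where
  "validE s e \<longleftrightarrow> (act_of s \<noteq> {} \<longrightarrow> e \<in> act_of s) \<and> (act_of s = {} \<and> uns_of s \<noteq> {} \<longrightarrow> e \<in> uns_of s)"

lemma state_split: "s = (act_of s, uns_of s, exp_of s)"
  by (simp add: act_of_def uns_of_def exp_of_def)

lemma activate_nonb: "act_of s \<noteq> {} \<Longrightarrow> activate d s e = s"
  by (simp add: activate_def)

lemma activate_b: "act_of s = {} \<Longrightarrow> activate d s e = (uns_of s \<inter> stub_sib d e, uns_of s - stub_sib d e, exp_of s)"
  by (simp add: activate_def)

lemma activ_facts:
  assumes P: "partn n d s" and V: "validE s e" and ne: "act_of s \<union> uns_of s \<noteq> {}"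
  shows "partn n d (activate d s e)" "exp_of (activate d s e) = exp_of s" "e \<in> act_of (activate d s e)"
    "act_of (activate d s e) \<union> uns_of (activate d s e) = act_of s \<union> uns_of s"
proof -
  have "partn n d (activate d s e) \<and> exp_of (activate d s e) = exp_of s \<and> e \<in> act_of (activate d s e)
    \<and> act_of (activate d s e) \<union> uns_of (activate d s e) = act_of s \<union> uns_of s"
  proof (cases "act_of s = {}")
    case True
    then have eU: "e \<in> uns_of s" using V ne by (auto simp: validE_def)
    then have "e \<in> stubs n d" using P by (auto simp: partn_def)
    then have "e \<in> stub_sib d e" by (rule sib_self)
    then show ?thesis using True eU P unfolding activate_b[OF True] partn_def by auto
  next
    case False
    then show ?thesis using V P by (simp add: activate_nonb validE_def)
  qed
  then show "partn n d (activate d s e)" "exp_of (activate d s e) = exp_of s" "e \<in> act_of (activate d s e)"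
    "act_of (activate d s e) \<union> uns_of (activate d s e) = act_of s \<union> uns_of s" by auto
qed

lemma upd_partn:
  assumes P: "partn n d (A,U,E)" and eA: "e \<in> A" and hS: "h \<in> (A \<union> U) - {e}"
  shows "partn n d (upd_state d (A,U,E) e h r)" "exp_of (upd_state d (A,U,E) e h r) = E \<union> {e,h}"
proof -
  have hs: "h \<in> stubs n d" using P hS by (auto simp: partn_def)
  then have hsib: "stub_sib d h \<subseteq> stubs n d" by (rule sib_sub)
  have "partn n d (upd_state d (A,U,E) e h r) \<and> exp_of (upd_state d (A,U,E) e h r) = E \<union> {e,h}"
  proof (cases "h \<in> U")
    case True
    show ?thesis
    proof (cases r)
      case True
      have hh: "h \<in> stub_sib d h" using hs by (rule sib_self)
      show ?thesis using True upd_UT[OF \<open>h \<in> U\<close>, of d A E e] P eA hS hsib \<open>h \<in> U\<close> hh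
        unfolding partn_def by auto
    next
      case False
      then show ?thesis using upd_UF[OF \<open>h \<in> U\<close>, of d A E e] P eA hS \<open>h \<in> U\<close>
        unfolding partn_def by auto
    qed
  next
    case False
    then show ?thesis using upd_A[OF False, of d A E e r] P eA hS unfolding partn_def by auto
  qed
  then show "partn n d (upd_state d (A,U,E) e h r)" "exp_of (upd_state d (A,U,E) e h r) = E \<union> {e,h}" by auto
qed

lemma card_AU:
  assumes "partn n d s"
  shows "card (act_of s \<union> uns_of s) = n * d - card (exp_of s)"
proof -
  have f: "finite (act_of s \<union> uns_of s)" "finite (exp_of s)"
    using assms unfolding partn_def by (metis finite_Un finite_stubs)+
  have "card (act_of s \<union> uns_of s \<union> exp_of s) = card (act_of s \<union> uns_of s) + card (exp_of s)"
    using assms f by (intro card_Un_disjoint) (auto simp: partn_def)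
  then show ?thesis using assms by (simp add: partn_def)
qed



lemma step_unfold:
  assumes "\<not> (act_of s = {} \<and> uns_of s = {})"
  shows "expl_step n d p s e = bind_pmf (pmf_of_set (stubs n d - (exp_of (activate d s e) \<union> {e})))
     (\<lambda>h. bind_pmf (bernoulli_pmf p) (\<lambda>r. return_pmf (upd_state d (activate d s e) e h r)))"
  using assms unfolding expl_step_def Let_def by (auto split: if_split)

lemma step_setup:
  assumes I: "inv n d t s" and V: "validE s e" and lt: "2 * t < d * n" and ev: "even (d * n)"
  defines "s' \<equiv> activate d s e"
  defines "S \<equiv> stubs n d - (exp_of s' \<union> {e})"
  shows "\<not> (act_of s = {} \<and> uns_of s = {})" "partn n d s'" "e \<in> act_of s'" "exp_of s' = exp_of s"
    "S = (act_of s' \<union> uns_of s') - {e}" "finite S" "S \<noteq> {}" "card S \<le> n * d"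
proof -
  have P: "partn n d s" and cE: "card (exp_of s) = 2 * t" using I by (auto simp: inv_def)
  have cAU: "card (act_of s \<union> uns_of s) = n * d - 2 * t" using card_AU[OF P] cE by simp
  then have "card (act_of s \<union> uns_of s) \<ge> 2"
  proof -
    have "even (n * d - 2 * t)" using ev by (simp add: mult.commute)
    moreover have "n * d - 2 * t > 0" using lt by (simp add: mult.commute)
    ultimately have "n * d - 2 * t \<ge> 2" by (metis One_nat_def Suc_leI dvd_imp_le less_one not_less odd_one le_neq_implies_less nat_dvd_not_less) 
    then show ?thesis using cAU by simp
  qed
  then have ne: "act_of s \<union> uns_of s \<noteq> {}" by auto
  then show "\<not> (act_of s = {} \<and> uns_of s = {})" by auto
  note af = activ_facts[OF P V ne]
  show P': "partn n d s'" "e \<in> act_of s'" "exp_of s' = exp_of s" using af by (auto simp: s'_def)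
  show Seq: "S = (act_of s' \<union> uns_of s') - {e}" using P' unfolding S_def partn_def by auto
  show fin: "finite S" unfolding S_def by simp
  have "card S = card (act_of s' \<union> uns_of s') - 1" using Seq P' by (simp add: card_Diff_singleton)
  also have "card (act_of s' \<union> uns_of s') = card (act_of s \<union> uns_of s)" using af by (simp add: s'_def)
  finally have cS: "card S \<ge> 1" using \<open>card (act_of s \<union> uns_of s) \<ge> 2\<close> by simp
  then show "S \<noteq> {}" by auto
  show "card S \<le> n * d" unfolding S_def using card_mono[of "stubs n d" "stubs n d - (exp_of s' \<union> {e})"] by simp
qed



lemma step_support:
  assumes I: "inv n d t s" and V: "validE s e" and lt: "2 * t < d * n" and ev: "even (d * n)"
    and x: "x \<in> set_pmf (expl_step n d p s e)"
  shows "inv n d (Suc t) x"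
proof -
  note su = step_setup[OF I V lt ev]
  define s' where "s' = activate d s e"
  define S where "S = stubs n d - (exp_of s' \<union> {e})"
  have fS: "finite S" "S \<noteq> {}" using su by (simp_all add: s'_def S_def)
  from x obtain h r where hS: "h \<in> S" and xe: "x = upd_state d s' e h r"
    unfolding step_unfold[OF su(1)] s'_def[symmetric] S_def[symmetric] using fS by auto
  have P': "partn n d (act_of s', uns_of s', exp_of s')" using su(2) state_split[of s'] by (simp add: s'_def)
  have eA: "e \<in> act_of s'" using su(3) by (simp add: s'_def)
  have Seq: "S = (act_of s' \<union> uns_of s') - {e}" unfolding S_def s'_def by (rule su(5))
  have hS': "h \<in> (act_of s' \<union> uns_of s') - {e}" using hS Seq by blast
  note up = upd_partn[OF P' eA hS', of r]
  have xe': "x = upd_state d (act_of s', uns_of s', exp_of s') e h r" using xe state_split[of s'] by simp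
  have "e \<notin> exp_of s'" "h \<notin> exp_of s'" "e \<noteq> h" using P' eA hS' unfolding partn_def by auto
  moreover have "finite (exp_of s')" using P' unfolding partn_def act_of_simp uns_of_simp exp_of_simp by (metis finite_Un finite_stubs)
  ultimately have "card (exp_of s' \<union> {e,h}) = card (exp_of s') + 2" by (simp add: card_insert_if)
  moreover have "card (exp_of s') = 2 * t" using su(4) I by (simp add: s'_def inv_def)
  ultimately show ?thesis using up xe' by (simp add: inv_def)
qed

lemma exp_quad:
  fixes x :: real
  assumes "\<bar>x\<bar> \<le> 1"
  shows "exp x \<le> 1 + x + x^2"
proof (cases "x \<ge> 0")
  case True
  then show ?thesis using exp_bound[of x] assms by simp
next
  case False
  have pos: "1 - x > 0" using False by simp
  have "1 - x \<le> exp (-x)" using exp_ge_add_one_self[of "-x"] by simp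
  then have "exp x * (1 - x) \<le> exp x * exp (-x)" by (intro mult_left_mono) auto
  then have "exp x * (1 - x) \<le> 1" by (simp add: exp_minus field_simps)
  moreover have "1 \<le> (1 + x + x^2) * (1 - x)"
  proof -
    have "(1 + x + x^2) * (1 - x) = 1 - x^3" by (simp add: algebra_simps power2_eq_square power3_eq_cube)
    moreover have "x^3 \<le> 0"
    proof -
      have "x * x \<ge> 0" by simp
      then have "(x * x) * x \<le> 0" using False by (intro mult_nonneg_nonpos) auto
      then show ?thesis by (simp add: power3_eq_cube)
    qed
    ultimately show ?thesis by simp
  qed
  ultimately have "exp x * (1 - x) \<le> (1 + x + x^2) * (1 - x)" by linarith
  then show ?thesis using pos by (simp add: mult_le_cancel_right)
qed



definition Pc :: "nat \<Rightarrow> expl_state \<Rightarrow> nat" where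
  "Pc d s = card (UPs d (uns_of s))"

definition D2v :: "nat \<Rightarrow> real \<Rightarrow> real \<Rightarrow> expl_state \<Rightarrow> stub \<Rightarrow> real" where
  "D2v d G kn s e = real (card (act_of (activate d s e))) - real (card (act_of s))
     - real d * (if act_of s = {} then 1 else 0)
     - G * (real (Pc d (activate d s e)) - real (Pc d s)) + real (Pc d s) / kn"

lemma Pc_le: "partn n d s \<Longrightarrow> Pc d s \<le> n * d"
proof -
  assume P: "partn n d s"
  have "UPs d (uns_of s) \<subseteq> stubs n d" using P UPs_sub unfolding partn_def by blast
  then have "card (UPs d (uns_of s)) \<le> card (stubs n d)" by (intro card_mono) auto
  then show ?thesis by (simp add: Pc_def)
qed

lemma D2_facts:
  assumes P: "partn n d s" and V: "validE s e" and ne: "act_of s \<union> uns_of s \<noteq> {}"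
    and d3: "d \<ge> 3" and G0: "0 \<le> G" and G1: "G \<le> 1" and Gd: "G * real d + real d / kn \<le> 1"
    and kn: "kn \<ge> real (n * d)" "kn > 0"
  shows "D2v d G kn s e \<le> real (Pc d (activate d s e)) / kn"
    "\<bar>D2v d G kn s e\<bar> \<le> 2 * real d + 1"
proof -
  define s' where "s' = activate d s e"
  define P0 where "P0 = real (Pc d s)"
  define P1 where "P1 = real (Pc d s')"
  have P0le: "P0 / kn \<le> 1"
  proof -
    have "real (Pc d s) \<le> real (n * d)" using Pc_le[OF P] by linarith
    then have "P0 \<le> kn" using kn by (simp add: P0_def)
    then show ?thesis using kn by simp
  qed
  have P0ge: "P0 / kn \<ge> 0" using kn by (simp add: P0_def)
  have "(D2v d G kn s e \<le> P1 / kn) \<and> (\<bar>real (card (act_of s')) - real (card (act_of s)) - real d * (if act_of s = {} then 1 else 0)\<bar> \<le> real d)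
      \<and> \<bar>P1 - P0\<bar> \<le> real d"
  proof (cases "act_of s = {}")
    case False
    then have "s' = s" by (simp add: s'_def activate_nonb)
    then show ?thesis using False d3 by (simp add: D2v_def P1_def P0_def s'_def[symmetric])
  next
    case b: True
    have eU: "e \<in> uns_of s" using V ne b by (auto simp: validE_def)
    have Us: "uns_of s \<subseteq> stubs n d" using P unfolding partn_def by blast
    have es: "e \<in> stubs n d" using eU Us by blast
    have ee: "e \<in> stub_sib d e" using es by (rule sib_self)
    have s'e: "s' = (uns_of s \<inter> stub_sib d e, uns_of s - stub_sib d e, exp_of s)"
      using b by (simp add: s'_def activate_b)
    have UP': "UPs d (uns_of s') = UPs d (uns_of s) - stub_sib d e"
      using UPs_minus_sib[OF Us] s'e by simp
    have finUP: "finite (UPs d (uns_of s))" using Us UPs_sub finite_subset by (metis finite_stubs)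
    show ?thesis
    proof (cases "stub_sib d e \<subseteq> uns_of s")
      case fr: True
      have "act_of s' = stub_sib d e" using s'e fr by auto
      moreover have "UPs d (uns_of s') = UPs d (uns_of s)" using UP' UPs_fresh_disj[OF fr] by blast
      ultimately show ?thesis using b d3
        by (simp add: D2v_def P1_def P0_def s'_def[symmetric] Pc_def)
    next
      case pa: False
      have A'sub: "act_of s' \<subset> stub_sib d e" using s'e pa by auto
      have cA'1: "card (act_of s') < d" using psubset_card_mono[OF finite_sib A'sub] by simp
      have "e \<in> act_of s'" using s'e eU ee by simp
      then have cA'0: "card (act_of s') \<ge> 1" using A'sub card_gt_0_iff[of "act_of s'"]
        by (metis finite_sib finite_subset less_imp_le_nat psubset_imp_subset One_nat_def Suc_leI empty_iff)
      have Pup: "P1 \<le> P0" using UP' card_mono[OF finUP, of "UPs d (uns_of s) - stub_sib d e"]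
        by (simp add: P1_def P0_def Pc_def)
      have Plo: "P1 \<ge> P0 - real d"
      proof -
        have "card (UPs d (uns_of s)) - card (stub_sib d e) \<le> card (UPs d (uns_of s) - stub_sib d e)"
          by (rule diff_card_le_card_Diff) simp
        then show ?thesis using UP' by (simp add: P1_def P0_def Pc_def)
      qed
      have "G * (P0 - P1) \<le> G * real d" using G0 Plo by (intro mult_left_mono) auto
      moreover have "P0 / kn \<le> P1 / kn + real d / kn" using Plo kn by (simp add: field_simps)
      moreover have "real (card (act_of s')) \<le> real d - 1" using cA'1 by linarith
      ultimately have "D2v d G kn s e \<le> P1 / kn"
        unfolding D2v_def s'_def[symmetric] P1_def[symmetric] P0_def[symmetric] using b Gd
        by (simp add: algebra_simps)
      then show ?thesis using b cA'0 cA'1 Pup Plo by auto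
    qed
  qed
  then have A: "D2v d G kn s e \<le> P1 / kn"
    and B: "\<bar>real (card (act_of s')) - real (card (act_of s)) - real d * (if act_of s = {} then 1 else 0)\<bar> \<le> real d"
    and C: "\<bar>P1 - P0\<bar> \<le> real d" by auto
  show "D2v d G kn s e \<le> real (Pc d (activate d s e)) / kn" using A by (simp add: P1_def s'_def)
  have "G * \<bar>P1 - P0\<bar> \<le> 1 * real d" by (rule mult_mono[OF G1 C]) auto
  then have "\<bar>G * (P1 - P0)\<bar> \<le> 1 * real d" using G0 by (simp add: abs_mult)
  then show "\<bar>D2v d G kn s e\<bar> \<le> 2 * real d + 1"
    using B P0le P0ge unfolding D2v_def s'_def[symmetric] P1_def[symmetric] P0_def[symmetric]
    by (simp add: abs_le_iff)
qed



definition Dl :: "nat \<Rightarrow> real \<Rightarrow> real \<Rightarrow> expl_state \<Rightarrow> expl_state \<Rightarrow> real" where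
  "Dl d G kn s x = real (card (act_of x)) - real (card (act_of s)) - real d * (if act_of s = {} then 1 else 0)
     - G * real (Pc d x) + (G + 1 / kn) * real (Pc d s)"

lemma step_bound:
  assumes I: "inv n d t s" and V: "validE s e" and lt: "2 * t < d * n" and ev: "even (d * n)"
    and d3: "d \<ge> 3" and p0: "0 \<le> p" and p1: "p \<le> 1"
    and pe: "p * (real d - 1) - 1 \<le> eps0"
    and q1: "(1 - p) * (real d - 1) \<ge> 1/2"
    and q2: "p * (real d - 2) - 1 \<le> - 1 / (2 * (real d - 1))"
    and e0: "0 \<le> eps0"
    and G0: "0 \<le> G" and Gs: "(real d + 1/2) * G \<le> 1 / (4 * (real d - 1))"
    and Gd: "G * real d + real d / kn \<le> 1"
    and kn: "kn = 4 * real d * (real d - 1) * real n"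
    and th0: "0 \<le> \<theta>" and th1: "\<theta> * (6 * real d) \<le> 1"
  shows "(\<integral>\<^sup>+x. ennreal (exp (\<theta> * Dl d G kn s x)) \<partial>expl_step n d p s e)
      \<le> ennreal (exp (\<theta> * (eps0 - G/2) + \<theta>^2 * (6 * real d)^2))"
proof -
  note su = step_setup[OF I V lt ev]
  define s' where "s' = activate d s e"
  define A' where "A' = act_of s'"
  define U' where "U' = uns_of s'"
  define E' where "E' = exp_of s'"
  define S where "S = stubs n d - (exp_of s' \<union> {e})"
  define c where "c = \<theta>^2 * (6 * real d)^2"
  have s'eq: "s' = (A', U', E')" unfolding A'_def U'_def E'_def by (rule state_split)
  have Seq: "S = (A' \<union> U') - {e}" unfolding S_def s'_def A'_def U'_def by (rule su(5))
  have fS: "finite S" and neS: "S \<noteq> {}" and cS: "card S \<le> n * d"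
    using su(6,7,8) by (simp_all add: S_def s'_def)
  have P': "partn n d s'" and eA: "e \<in> A'" using su(2,3) by (simp_all add: s'_def A'_def)
  have AU: "A' \<inter> U' = {}" and As: "A' \<subseteq> stubs n d" and Us: "U' \<subseteq> stubs n d"
    using P' unfolding partn_def A'_def U'_def by auto
  have npos: "n > 0" using lt by (cases n) auto
  have dpos: "real d - 1 > 0" using d3 by simp
  have knpos: "kn > 0" using kn npos d3 by simp
  have knge: "kn \<ge> real (n * d)"
  proof -
    have "real (n * d) = 1 * real d * real n" by simp
    also have "\<dots> \<le> (4 * (real d - 1)) * real d * real n" using d3 by (intro mult_right_mono) auto
    finally show ?thesis using kn by (simp add: algebra_simps)
  qed
  have Gle: "G \<le> 1"
  proof -
    have "1 / (4 * (real d - 1)) \<le> 1" using d3 by (simp add: field_simps)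
    moreover have "G \<le> (real d + 1/2) * G" using G0 d3 by (simp add: mult_le_cancel_right1)
    ultimately show ?thesis using Gs by linarith
  qed
  have ne: "act_of s \<union> uns_of s \<noteq> {}" using su(1) by auto
  have P: "partn n d s" using I by (simp add: inv_def)
  note D2f = D2_facts[OF P V ne d3 G0 Gle Gd knge knpos]
  define D2 where "D2 = D2v d G kn s e"
  define Pp where "Pp = real (card (UPs d U'))"
  have D2le: "D2 \<le> Pp / kn" using D2f(1) by (simp add: D2_def Pp_def Pc_def s'_def[symmetric] U'_def)
  have D2abs: "\<bar>D2\<bar> \<le> 2 * real d + 1" using D2f(2) by (simp add: D2_def)
  define Dh where "Dh h r = Dl d G kn s (upd_state d s' e h r)" for h r
  have ctx: "stepctx n d A' U' e h" if "h \<in> S" for h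
    using AU eA that Us As Seq by unfold_locales auto
  have iden: "Dh h r = D13 d A' U' E' e G h r + D2" for h r
  proof -
    have u: "upd_state d s' e h r = upd_state d (A',U',E') e h r" using s'eq by simp
    have a: "act_of (activate d s e) = A'" "uns_of (activate d s e) = U'" by (simp_all add: A'_def U'_def s'_def)
    show ?thesis unfolding Dh_def Dl_def D13_def D2_def D2v_def Pc_def u a by (simp add: algebra_simps)
  qed
  have Dhabs: "\<bar>Dh h r\<bar> \<le> 6 * real d" if "h \<in> S" for h r
  proof -
    have "\<bar>D13 d A' U' E' e G h r\<bar> \<le> 2 * real d"
      using stepctx.D13_bound[OF ctx[OF that] G0 Gle d3] .
    then show ?thesis using iden[of h r] D2abs d3 by linarith
  qed
  have pw: "exp (\<theta> * Dh h r) \<le> 1 + \<theta> * Dh h r + c" if "h \<in> S" for h r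
  proof -
    have a: "\<bar>\<theta> * Dh h r\<bar> \<le> \<theta> * (6 * real d)"
      using Dhabs[OF that, of r] th0 by (simp add: abs_mult mult_left_mono)
    then have "\<bar>\<theta> * Dh h r\<bar> \<le> 1" using th1 by linarith
    then have "exp (\<theta> * Dh h r) \<le> 1 + \<theta> * Dh h r + (\<theta> * Dh h r)^2" by (rule exp_quad)
    moreover have "(\<theta> * Dh h r)^2 \<le> (\<theta> * (6 * real d))^2"
    proof -
      have "\<bar>\<theta> * Dh h r\<bar> \<le> \<bar>\<theta> * (6 * real d)\<bar>" using a th0 by simp
      then show ?thesis by (simp only: abs_le_square_iff)
    qed
    ultimately show ?thesis by (simp add: c_def power_mult_distrib)
  qed
  have mean: "p * D13 d A' U' E' e G h True + (1 - p) * D13 d A' U' E' e G h False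
     \<le> eps0 - G/2 - (if h \<in> UPs d U' then 1 / (4 * (real d - 1)) else 0)" if "h \<in> S" for h
    using stepctx.D13_mean[OF ctx[OF that] p0 p1 pe q1 q2 G0 Gs e0 d3] .
  define ind where "ind h = (if h \<in> UPs d U' then 1 / (4 * (real d - 1)) else 0)" for h
  have perh: "p * exp (\<theta> * Dh h True) + (1 - p) * exp (\<theta> * Dh h False)
      \<le> 1 + c + \<theta> * D2 + \<theta> * (eps0 - G/2) - \<theta> * ind h" if "h \<in> S" for h
  proof -
    have "p * exp (\<theta> * Dh h True) \<le> p * (1 + \<theta> * Dh h True + c)"
      using pw[OF that] p0 by (rule mult_left_mono)
    moreover have "(1 - p) * exp (\<theta> * Dh h False) \<le> (1 - p) * (1 + \<theta> * Dh h False + c)"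
      using pw[OF that] p1 by (intro mult_left_mono) auto
    moreover have "p * (1 + \<theta> * Dh h True + c) + (1 - p) * (1 + \<theta> * Dh h False + c)
        = 1 + c + \<theta> * D2 + \<theta> * (p * D13 d A' U' E' e G h True + (1 - p) * D13 d A' U' E' e G h False)"
      by (simp add: iden algebra_simps)
    moreover have "\<theta> * (p * D13 d A' U' E' e G h True + (1 - p) * D13 d A' U' E' e G h False)
        \<le> \<theta> * (eps0 - G/2 - ind h)"
      using mean[OF that] th0 unfolding ind_def by (intro mult_left_mono) auto
    ultimately show ?thesis by (simp add: algebra_simps)
  qed
  have UPsub: "UPs d U' \<subseteq> S" using UPs_sub Seq eA AU by blast
  have sumind: "(\<Sum>h\<in>S. ind h) = Pp / (4 * (real d - 1))"
  proof -
    have "(\<Sum>h\<in>S. ind h) = (\<Sum>h\<in>S \<inter> UPs d U'. 1 / (4 * (real d - 1)))"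
      unfolding ind_def by (rule sum.inter_restrict[OF fS, symmetric])
    also have "S \<inter> UPs d U' = UPs d U'" using UPsub by blast
    finally show ?thesis by (simp add: Pp_def)
  qed
  have Spos: "real (card S) > 0" using fS neS by (simp add: card_gt_0_iff)
  have sumb: "(\<Sum>h\<in>S. p * exp (\<theta> * Dh h True) + (1 - p) * exp (\<theta> * Dh h False))
      \<le> real (card S) * (1 + c + \<theta> * D2 + \<theta> * (eps0 - G/2)) - \<theta> * (Pp / (4 * (real d - 1)))"
  proof -
    have "(\<Sum>h\<in>S. p * exp (\<theta> * Dh h True) + (1 - p) * exp (\<theta> * Dh h False))
        \<le> (\<Sum>h\<in>S. 1 + c + \<theta> * D2 + \<theta> * (eps0 - G/2) - \<theta> * ind h)"
      using perh by (rule sum_mono)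
    also have "\<dots> = real (card S) * (1 + c + \<theta> * D2 + \<theta> * (eps0 - G/2)) - \<theta> * (\<Sum>h\<in>S. ind h)"
      by (simp add: sum_subtractf sum_distrib_left[symmetric])
    finally show ?thesis using sumind by simp
  qed
  have key: "\<theta> * D2 \<le> \<theta> * (Pp / (4 * (real d - 1))) / real (card S)"
  proof -
    have "4 * (real d - 1) * real (card S) \<le> kn"
    proof -
      have "real (card S) \<le> real n * real d" using cS by (metis of_nat_le_iff of_nat_mult)
      then have "4 * (real d - 1) * real (card S) \<le> 4 * (real d - 1) * (real n * real d)"
        using dpos by (intro mult_left_mono) auto
      then show ?thesis using kn by (simp add: algebra_simps)
    qed
    then have "Pp / kn \<le> Pp / (4 * (real d - 1) * real (card S))"
      using Spos dpos knpos by (intro divide_left_mono) (auto simp: Pp_def)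
    then have "D2 \<le> Pp / (4 * (real d - 1)) / real (card S)" using D2le by simp
    then have "\<theta> * D2 \<le> \<theta> * (Pp / (4 * (real d - 1)) / real (card S))" using th0 by (rule mult_left_mono)
    then show ?thesis by simp
  qed
  have avg: "(\<Sum>h\<in>S. p * exp (\<theta> * Dh h True) + (1 - p) * exp (\<theta> * Dh h False)) / real (card S)
      \<le> 1 + (\<theta> * (eps0 - G/2) + c)"
  proof -
    have "(\<Sum>h\<in>S. p * exp (\<theta> * Dh h True) + (1 - p) * exp (\<theta> * Dh h False)) / real (card S)
       \<le> (real (card S) * (1 + c + \<theta> * D2 + \<theta> * (eps0 - G/2)) - \<theta> * (Pp / (4 * (real d - 1)))) / real (card S)"
      using sumb Spos by (intro divide_right_mono) auto
    also have "\<dots> = 1 + c + \<theta> * D2 + \<theta> * (eps0 - G/2) - \<theta> * (Pp / (4 * (real d - 1))) / real (card S)"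
      using Spos dpos by (simp add: field_simps)
    also have "\<dots> \<le> 1 + (\<theta> * (eps0 - G/2) + c)" using key by simp
    finally show ?thesis .
  qed
  have "(\<integral>\<^sup>+x. ennreal (exp (\<theta> * Dl d G kn s x)) \<partial>expl_step n d p s e)
      = ennreal ((\<Sum>h\<in>S. p * exp (\<theta> * Dh h True) + (1 - p) * exp (\<theta> * Dh h False)) / real (card S))"
    unfolding step_unfold[OF su(1)] s'_def[symmetric] S_def[symmetric] Dh_def
    by (rule nn_step_formula[OF fS neS p0 p1]) simp
  also have "\<dots> \<le> ennreal (exp (\<theta> * (eps0 - G/2) + c))"
    using avg exp_ge_add_one_self[of "\<theta> * (eps0 - G/2) + c"] by (intro ennreal_leI) linarith
  finally show ?thesis by (simp add: c_def)
qed


definition Kc :: "expl_state list \<Rightarrow> nat" where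
  "Kc xs = length (filter (\<lambda>s. act_of s = {}) (butlast xs))"

definition Phi :: "nat \<Rightarrow> real \<Rightarrow> nat \<Rightarrow> expl_state list \<Rightarrow> real" where
  "Phi d kn m xs = real (card (act_of (last xs))) - real d * real (Kc xs)
     + (real (length xs - 1) - real m) / kn * real (Pc d (last xs))"

lemma traj_len: "xs \<in> set_pmf (expl_traj n d p sel t) \<Longrightarrow> length xs = Suc t"
  by (induction t arbitrary: xs) auto

lemma Kc_snoc: "xs \<noteq> [] \<Longrightarrow> Kc (xs @ [x]) = Kc xs + (if act_of (last xs) = {} then 1 else 0)"
proof -
  assume "xs \<noteq> []"
  then have "xs = butlast xs @ [last xs]" by simp
  then have "filter (\<lambda>s. act_of s = {}) xs = filter (\<lambda>s. act_of s = {}) (butlast xs) @ filter (\<lambda>s. act_of s = {}) [last xs]"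
    by (metis filter_append)
  then show ?thesis by (simp add: Kc_def)
qed

lemma Phi_snoc:
  assumes "length xs = Suc t" and kn: "kn \<noteq> 0"
  shows "Phi d kn m (xs @ [x]) = Phi d kn m xs + Dl d ((real m - real t - 1) / kn) kn (last xs) x"
proof -
  have ne: "xs \<noteq> []" using assms by auto
  show ?thesis using assms Kc_snoc[OF ne, of x] kn
    unfolding Phi_def Dl_def by (simp add: field_simps)
qed

lemma init_inv:
  assumes "V < n" "d \<ge> 1"
  shows "inv n d 0 (init_state n d V)" "act_of (init_state n d V) \<noteq> {}" "Pc d (init_state n d V) = 0"
    "card (act_of (init_state n d V)) = d"
proof -
  have sub: "stub_sib d (V,0) \<subseteq> stubs n d" using assms by (auto simp: sib_mem stubs_mem)
  show "inv n d 0 (init_state n d V)" using sub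
    by (auto simp: inv_def partn_def init_state_def)
  show "act_of (init_state n d V) \<noteq> {}" using assms by (auto simp: init_state_def stub_sib_def lessThan_empty_iff)
  show "card (act_of (init_state n d V)) = d" by (simp add: init_state_def)
  have "UPs d (stubs n d - stub_sib d (V,0)) = {}"
  proof -
    have "stub_sib d x \<subseteq> stubs n d - stub_sib d (V,0)" if "x \<in> stubs n d - stub_sib d (V,0)" for x
    proof -
      have "fst x \<noteq> V" "fst x < n" "snd x < d" using that by (auto simp: sib_mem stubs_mem)
      then show ?thesis by (auto simp: sib_mem stubs_mem)
    qed
    then show ?thesis unfolding UPs_def by blast
  qed
  then show "Pc d (init_state n d V) = 0" by (simp add: Pc_def init_state_def)
qed

lemma traj_inv:
  assumes sel: "valid_sel sel" and n: "n > 0" and d: "d \<ge> 1" and ev: "even (d * n)"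
  shows "xs \<in> set_pmf (expl_traj n d p sel t) \<Longrightarrow> 2 * t \<le> d * n \<Longrightarrow> inv n d t (last xs) \<and> act_of (hd xs) \<noteq> {}"
proof (induction t arbitrary: xs)
  case 0
  have "set_pmf (pmf_of_set {..<n}) = {..<n}" using n by (intro set_pmf_of_set) auto
  then obtain V where "V < n" "xs = [init_state n d V]" using 0 by auto
  then show ?case using init_inv[OF _ d] by simp
next
  case (Suc t)
  from Suc.prems(1) obtain ys x where ys: "ys \<in> set_pmf (expl_traj n d p sel t)" and
    x: "x \<in> set_pmf (expl_step n d p (last ys) (sel ys))" and xs: "xs = ys @ [x]" by auto
  have lt: "2 * t < d * n" using Suc.prems(2) by simp
  have IH: "inv n d t (last ys) \<and> act_of (hd ys) \<noteq> {}" using Suc.IH[OF ys] lt by simp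
  have V: "validE (last ys) (sel ys)" using sel by (simp add: valid_sel_def validE_def)
  have "inv n d (Suc t) x" using step_support[OF _ V lt ev x] IH by blast
  moreover have "ys \<noteq> []" using traj_len[OF ys] by auto
  ultimately show ?case using xs IH by simp
qed



lemma supermart:
  assumes sel: "valid_sel sel" and n: "n > 0" and d3: "d \<ge> 3" and ev: "even (d * n)"
    and p0: "0 \<le> p" and p1: "p \<le> 1"
    and pe: "p * (real d - 1) - 1 \<le> eps0"
    and q1: "(1 - p) * (real d - 1) \<ge> 1/2"
    and q2: "p * (real d - 2) - 1 \<le> - 1 / (2 * (real d - 1))"
    and e0: "0 \<le> eps0"
    and kn: "kn = 4 * real d * (real d - 1) * real n"
    and m2: "2 * m \<le> d * n"
    and Gs: "(real d + 1/2) * (real m / kn) \<le> 1 / (4 * (real d - 1))"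
    and Gd: "(real m / kn) * real d + real d / kn \<le> 1"
    and th0: "0 \<le> \<theta>" and th1: "\<theta> * (6 * real d) \<le> 1"
  shows "t \<le> m \<Longrightarrow> (\<integral>\<^sup>+xs. ennreal (exp (\<theta> * Phi d kn m xs)) \<partial>expl_traj n d p sel t)
     \<le> ennreal (exp (\<theta> * real d + (\<Sum>i<t. \<theta> * (eps0 - ((real m - real i - 1) / kn) / 2) + \<theta>^2 * (6 * real d)^2)))"
proof (induction t)
  case 0
  have s: "set_pmf (pmf_of_set {..<n}) = {..<n}" using n by (intro set_pmf_of_set) auto
  have "(\<integral>\<^sup>+xs. ennreal (exp (\<theta> * Phi d kn m xs)) \<partial>expl_traj n d p sel 0)
      = (\<integral>\<^sup>+V. ennreal (exp (\<theta> * real d)) \<partial>pmf_of_set {..<n})"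
  proof -
    have "Phi d kn m [init_state n d V] = real d" if "V < n" for V
      using init_inv[OF that] d3 by (simp add: Phi_def Kc_def)
    then have "(\<integral>\<^sup>+V. ennreal (exp (\<theta> * Phi d kn m [init_state n d V])) \<partial>pmf_of_set {..<n})
        = (\<integral>\<^sup>+V. ennreal (exp (\<theta> * real d)) \<partial>pmf_of_set {..<n})"
      apply (intro nn_integral_cong_AE AE_pmfI) using s by simp
    then show ?thesis by simp
  qed
  also have "\<dots> = ennreal (exp (\<theta> * real d))" by simp
  finally show ?case by simp
next
  case (Suc t)
  have tm: "t < m" using Suc.prems by simp
  have lt: "2 * t < d * n" using tm m2 by simp
  have knpos: "kn > 0" using kn n d3 by simp
  define C where "C = \<theta> * (eps0 - ((real m - real t - 1) / kn) / 2) + \<theta>^2 * (6 * real d)^2"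
  define G where "G = (real m - real t - 1) / kn"
  have G0: "0 \<le> G" using tm knpos by (simp add: G_def)
  have Gle: "G \<le> real m / kn" using knpos by (simp add: G_def divide_right_mono)
  have Gs': "(real d + 1/2) * G \<le> 1 / (4 * (real d - 1))"
  proof -
    have "(real d + 1/2) * G \<le> (real d + 1/2) * (real m / kn)" using Gle by (intro mult_left_mono) auto
    then show ?thesis using Gs by linarith
  qed
  have Gd': "G * real d + real d / kn \<le> 1"
  proof -
    have "G * real d \<le> (real m / kn) * real d" using Gle by (intro mult_right_mono) auto
    then show ?thesis using Gd by linarith
  qed
  have inner: "(\<integral>\<^sup>+x. ennreal (exp (\<theta> * Phi d kn m (ys @ [x]))) \<partial>expl_step n d p (last ys) (sel ys))
      \<le> ennreal (exp (\<theta> * Phi d kn m ys)) * ennreal (exp C)"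
    if ys: "ys \<in> set_pmf (expl_traj n d p sel t)" for ys
  proof -
    have len: "length ys = Suc t" using traj_len[OF ys] .
    have I: "inv n d t (last ys)" using traj_inv[OF sel n _ ev ys] d3 lt by simp
    have V: "validE (last ys) (sel ys)" using sel by (simp add: valid_sel_def validE_def)
    have "(\<integral>\<^sup>+x. ennreal (exp (\<theta> * Phi d kn m (ys @ [x]))) \<partial>expl_step n d p (last ys) (sel ys))
        = (\<integral>\<^sup>+x. ennreal (exp (\<theta> * Phi d kn m ys)) * ennreal (exp (\<theta> * Dl d G kn (last ys) x)) \<partial>expl_step n d p (last ys) (sel ys))"
    proof (intro nn_integral_cong)
      fix x
      have "exp (\<theta> * Phi d kn m (ys @ [x])) = exp (\<theta> * Phi d kn m ys) * exp (\<theta> * Dl d G kn (last ys) x)"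
        using Phi_snoc[OF len, of kn d m x] knpos by (simp add: G_def distrib_left exp_add)
      then show "ennreal (exp (\<theta> * Phi d kn m (ys @ [x]))) = ennreal (exp (\<theta> * Phi d kn m ys)) * ennreal (exp (\<theta> * Dl d G kn (last ys) x))"
        by (simp add: ennreal_mult)
    qed
    also have "\<dots> = ennreal (exp (\<theta> * Phi d kn m ys)) * (\<integral>\<^sup>+x. ennreal (exp (\<theta> * Dl d G kn (last ys) x)) \<partial>expl_step n d p (last ys) (sel ys))"
      by (rule nn_integral_cmult) simp
    also have "\<dots> \<le> ennreal (exp (\<theta> * Phi d kn m ys)) * ennreal (exp (\<theta> * (eps0 - G/2) + \<theta>^2 * (6 * real d)^2))"
      by (intro mult_left_mono step_bound[OF I V lt ev d3 p0 p1 pe q1 q2 e0 G0 Gs' Gd' kn th0 th1]) simp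
    finally show ?thesis by (simp add: C_def G_def)
  qed
  have "(\<integral>\<^sup>+xs. ennreal (exp (\<theta> * Phi d kn m xs)) \<partial>expl_traj n d p sel (Suc t))
      = (\<integral>\<^sup>+ys. (\<integral>\<^sup>+x. ennreal (exp (\<theta> * Phi d kn m (ys @ [x]))) \<partial>expl_step n d p (last ys) (sel ys)) \<partial>expl_traj n d p sel t)"
    by simp
  also have "\<dots> \<le> (\<integral>\<^sup>+ys. ennreal (exp (\<theta> * Phi d kn m ys)) * ennreal (exp C) \<partial>expl_traj n d p sel t)"
    by (intro nn_integral_mono_AE AE_pmfI inner)
  also have "\<dots> = (\<integral>\<^sup>+ys. ennreal (exp (\<theta> * Phi d kn m ys)) \<partial>expl_traj n d p sel t) * ennreal (exp C)"
    by (rule nn_integral_multc) simp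
  also have "\<dots> \<le> ennreal (exp (\<theta> * real d + (\<Sum>i<t. \<theta> * (eps0 - ((real m - real i - 1) / kn) / 2) + \<theta>^2 * (6 * real d)^2))) * ennreal (exp C)"
    using Suc.IH tm by (intro mult_right_mono) auto
  also have "\<dots> = ennreal (exp (\<theta> * real d + (\<Sum>i<Suc t. \<theta> * (eps0 - ((real m - real i - 1) / kn) / 2) + \<theta>^2 * (6 * real d)^2)))"
  proof -
    let ?X = "\<theta> * real d + (\<Sum>i<t. \<theta> * (eps0 - ((real m - real i - 1) / kn) / 2) + \<theta>^2 * (6 * real d)^2)"
    have "ennreal (exp ?X) * ennreal (exp C) = ennreal (exp ?X * exp C)" by (rule ennreal_mult[symmetric]) auto
    also have "exp ?X * exp C = exp (?X + C)" by (simp add: exp_add)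
    also have "?X + C = \<theta> * real d + (\<Sum>i<Suc t. \<theta> * (eps0 - ((real m - real i - 1) / kn) / 2) + \<theta>^2 * (6 * real d)^2)"
      by (simp add: C_def)
    finally show ?thesis .
  qed
  finally show ?case .
qed



lemma prefix_traj:
  "map_pmf (take (Suc m)) (expl_traj n d p sel (m + k)) = expl_traj n d p sel m"
proof (induction k)
  case 0
  have "map_pmf (take (Suc m)) (expl_traj n d p sel m) = expl_traj n d p sel m"
    by (rule map_pmf_idI) (simp add: traj_len)
  then show ?case by simp
next
  case (Suc k)
  have "map_pmf (take (Suc m)) (expl_traj n d p sel (m + Suc k))
      = bind_pmf (expl_traj n d p sel (m + k)) (\<lambda>xs. map_pmf (take (Suc m)) (map_pmf (\<lambda>s. xs @ [s]) (expl_step n d p (last xs) (sel xs))))"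
    by (simp add: map_bind_pmf)
  also have "\<dots> = bind_pmf (expl_traj n d p sel (m + k)) (\<lambda>xs. return_pmf (take (Suc m) xs))"
  proof (rule bind_pmf_cong[OF refl])
    fix xs assume "xs \<in> set_pmf (expl_traj n d p sel (m + k))"
    then have "length xs = Suc (m + k)" by (rule traj_len)
    then have "\<And>s. take (Suc m) (xs @ [s]) = take (Suc m) xs" by simp
    then show "map_pmf (take (Suc m)) (map_pmf (\<lambda>s. xs @ [s]) (expl_step n d p (last xs) (sel xs))) = return_pmf (take (Suc m) xs)"
      by (simp add: map_pmf_comp)
  qed
  also have "\<dots> = map_pmf (take (Suc m)) (expl_traj n d p sel (m + k))" by (simp add: map_pmf_def)
  finally show ?case using Suc.IH by simp
qed

lemma exc_aux:
  assumes fin: "finite Z" and Zp: "\<And>z. z \<in> Z \<Longrightarrow> Y z = 0 \<and> 1 \<le> z \<and> z \<le> m"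
  shows "i \<le> card Z \<Longrightarrow> exc_time Y i \<le> m \<and> card {z\<in>Z. exc_time Y i < z} + i \<ge> card Z"
proof (induction i)
  case 0
  have "{z\<in>Z. 0 < z} = Z" using Zp by force
  then show ?case by simp
next
  case (Suc i)
  let ?ti = "exc_time Y i"
  have IH: "card {z\<in>Z. ?ti < z} + i \<ge> card Z" using Suc by simp
  then have "card {z\<in>Z. ?ti < z} \<ge> 1" using Suc.prems by simp
  then have "{z\<in>Z. ?ti < z} \<noteq> {}" by (metis card.empty not_one_le_zero)
  then obtain z where z: "z \<in> Z" "?ti < z" by blast
  have Pz: "z \<ge> ?ti + 1 \<and> Y z = 0" using z Zp by auto
  have ts: "exc_time Y (Suc i) = (LEAST t. t \<ge> ?ti + 1 \<and> Y t = 0)" by simp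
  have le: "exc_time Y (Suc i) \<le> z" unfolding ts by (rule Least_le) (rule Pz)
  have Pt: "exc_time Y (Suc i) \<ge> ?ti + 1 \<and> Y (exc_time Y (Suc i)) = 0" unfolding ts by (rule LeastI) (rule Pz)
  have sub: "{z\<in>Z. ?ti < z} \<subseteq> insert (exc_time Y (Suc i)) {z\<in>Z. exc_time Y (Suc i) < z}"
  proof
    fix w assume w: "w \<in> {z\<in>Z. ?ti < z}"
    have "\<not> w < exc_time Y (Suc i)"
    proof
      assume "w < exc_time Y (Suc i)"
      moreover have "w \<ge> ?ti + 1 \<and> Y w = 0" using w Zp by auto
      ultimately show False unfolding ts using not_less_Least by blast
    qed
    then show "w \<in> insert (exc_time Y (Suc i)) {z\<in>Z. exc_time Y (Suc i) < z}" using w by auto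
  qed
  have "card {z\<in>Z. ?ti < z} \<le> card (insert (exc_time Y (Suc i)) {z\<in>Z. exc_time Y (Suc i) < z})"
    by (rule card_mono[OF _ sub]) (simp add: fin)
  also have "\<dots> \<le> card {z\<in>Z. exc_time Y (Suc i) < z} + 1" by (simp add: card_insert_le_m1 card_insert_if fin)
  finally have c: "card {z\<in>Z. ?ti < z} \<le> card {z\<in>Z. exc_time Y (Suc i) < z} + 1" .
  have "z \<le> m" using Zp z by blast
  then have "exc_time Y (Suc i) \<le> m" using le by linarith
  then show ?case using c IH by linarith
qed

lemma exc_le:
  assumes "finite Z" "\<And>z. z \<in> Z \<Longrightarrow> Y z = 0 \<and> 1 \<le> z \<and> z \<le> m" "k \<le> card Z"
  shows "exc_time Y k \<le> m"
  using exc_aux[OF assms(1,2) assms(3)] by simp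



lemma bad_reduce:
  assumes sel: "valid_sel sel" and n: "n > 0" and d: "d \<ge> 1" and ev: "even (d * n)"
    and xs: "xs \<in> set_pmf (expl_traj n d p sel (d * n div 2))" and m: "m \<le> d * n div 2"
    and L: "L \<ge> 1" and mB: "real m \<le> Bd"
    and bad: "\<not> real (exc_time (Yproc xs) (2 * L - 1)) \<le> Bd"
    and kn: "kn \<noteq> 0"
  shows "Phi d kn m (take (Suc m) xs) \<ge> - (2 * real d * real L)"
proof -
  define N where "N = d * n div 2"
  have len: "length xs = Suc N" using traj_len[OF xs] by (simp add: N_def)
  have "2 * N \<le> d * n" by (simp add: N_def)
  then have hd: "act_of (hd xs) \<noteq> {}" using traj_inv[OF sel n d ev xs] by (simp add: N_def)
  have mN: "m \<le> N" using m by (simp add: N_def)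
  define ys where "ys = take (Suc m) xs"
  have leny: "length ys = Suc m" using len mN by (simp add: ys_def)
  define Z where "Z = {i. i < m \<and> act_of (xs ! i) = {}}"
  have Kc: "Kc ys = card Z"
  proof -
    have "butlast ys = take m xs" unfolding ys_def using len mN by (simp add: butlast_take)
    then have "Kc ys = length (filter (\<lambda>s. act_of s = {}) (take m xs))" by (simp add: Kc_def)
    also have "\<dots> = card {i. i < length (take m xs) \<and> act_of (take m xs ! i) = {}}"
      by (rule length_filter_conv_card)
    also have "{i. i < length (take m xs) \<and> act_of (take m xs ! i) = {}} = Z"
      using len mN by (auto simp: Z_def)
    finally show ?thesis .
  qed
  have "Kc ys < 2 * L - 1"
  proof (rule ccontr)
    assume "\<not> Kc ys < 2 * L - 1"
    then have k: "2 * L - 1 \<le> card Z" using Kc by simp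
    have fin: "finite Z" unfolding Z_def by simp
    have Zp: "Yproc xs z = 0 \<and> 1 \<le> z \<and> z \<le> m" if "z \<in> Z" for z
    proof -
      have z: "z < m" "act_of (xs ! z) = {}" using that by (auto simp: Z_def)
      have "z < length xs" using z len mN by simp
      then have "Yproc xs z = 0" using z by (simp add: Yproc_def)
      moreover have "z \<noteq> 0" using z hd len by (metis hd_conv_nth list.size(3) nat.distinct(1))
      ultimately show ?thesis using z by simp
    qed
    have "exc_time (Yproc xs) (2 * L - 1) \<le> m" by (rule exc_le[OF fin Zp k])
    then have "real (exc_time (Yproc xs) (2 * L - 1)) \<le> Bd" using mB by linarith
    then show False using bad by simp
  qed
  then have "real (Kc ys) \<le> 2 * real L" by linarith
  then have "real d * real (Kc ys) \<le> real d * (2 * real L)" by (intro mult_left_mono) auto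
  moreover have "Phi d kn m ys = real (card (act_of (last ys))) - real d * real (Kc ys)"
    using leny kn by (simp add: Phi_def)
  ultimately show ?thesis unfolding ys_def[symmetric] by simp
qed

lemma markov_bound:
  fixes M :: "'a pmf"
  assumes th0: "0 \<le> \<theta>" and I: "(\<integral>\<^sup>+x. ennreal (exp (\<theta> * f x)) \<partial>M) \<le> ennreal (exp b)"
  shows "measure_pmf.prob M {x. f x \<ge> a} \<le> exp (b - \<theta> * a)"
proof -
  have "emeasure (measure_pmf M) {x. f x \<ge> a} = (\<integral>\<^sup>+x. indicator {x. f x \<ge> a} x \<partial>M)" by simp
  also have "\<dots> \<le> (\<integral>\<^sup>+x. ennreal (exp (\<theta> * f x)) * ennreal (exp (- \<theta> * a)) \<partial>M)"
  proof (intro nn_integral_mono)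
    fix x
    show "indicator {x. f x \<ge> a} x \<le> ennreal (exp (\<theta> * f x)) * ennreal (exp (- \<theta> * a))"
    proof (cases "f x \<ge> a")
      case True
      then have "\<theta> * a \<le> \<theta> * f x" using th0 by (rule mult_left_mono)
      then have "1 \<le> exp (\<theta> * f x - \<theta> * a)" by simp
      also have "exp (\<theta> * f x - \<theta> * a) = exp (\<theta> * f x) * exp (- \<theta> * a)" by (simp add: exp_diff exp_minus field_simps)
      finally have "1 \<le> exp (\<theta> * f x) * exp (- \<theta> * a)" .
      then have "ennreal 1 \<le> ennreal (exp (\<theta> * f x) * exp (- \<theta> * a))" by (rule ennreal_leI)
      then show ?thesis using True by (simp add: ennreal_mult)
    qed simp
  qed
  also have "\<dots> = (\<integral>\<^sup>+x. ennreal (exp (\<theta> * f x)) \<partial>M) * ennreal (exp (- \<theta> * a))"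
    by (rule nn_integral_multc) simp
  also have "\<dots> \<le> ennreal (exp b) * ennreal (exp (- \<theta> * a))" using I by (rule mult_right_mono) simp
  also have "\<dots> = ennreal (exp b * exp (- \<theta> * a))" by (rule ennreal_mult[symmetric]) auto
  also have "exp b * exp (- \<theta> * a) = exp (b - \<theta> * a)" by (simp add: exp_diff exp_minus field_simps)
  finally have "ennreal (measure_pmf.prob M {x. f x \<ge> a}) \<le> ennreal (exp (b - \<theta> * a))"
    by (simp add: measure_pmf.emeasure_eq_measure)
  then show ?thesis by (simp add: ennreal_le_iff)
qed



lemma sum_gauss: "(\<Sum>i<m. real i) = real m * (real m - 1) / 2"
  by (induction m) (simp_all add: algebra_simps)

lemma sum_lin: "(\<Sum>i<m. (real m - real i - 1)) = real m * (real m - 1) / 2"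
proof -
  have "(\<Sum>i<m. (real m - real i - 1)) = (\<Sum>i<m. (real m - 1) - real i)"
    by (intro sum.cong) auto
  also have "\<dots> = (\<Sum>i<m. (real m - 1)) - (\<Sum>i<m. real i)"
    by (rule sum_subtractf)
  also have "\<dots> = real m * (real m - 1) - real m * (real m - 1) / 2" by (simp add: sum_gauss)
  finally show ?thesis by simp
qed

lemma sum_lin2: "(\<Sum>i<m. a - b * (real m - real i - 1) + c) = real m * a - b * (real m * (real m - 1) / 2) + real m * c"
proof -
  have "(\<Sum>i<m. a - b * (real m - real i - 1) + c) = (\<Sum>i<m. a) - (\<Sum>i<m. b * (real m - real i - 1)) + (\<Sum>i<m. c)"
    by (simp add: sum.distrib sum_subtractf)
  also have "(\<Sum>i<m. b * (real m - real i - 1)) = b * (\<Sum>i<m. (real m - real i - 1))" by (simp add: sum_distrib_left)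
  finally show ?thesis by (simp add: sum_lin)
qed

lemma core_bound:
  assumes sel: "valid_sel sel" and n: "n > 0" and d3: "d \<ge> 3" and ev: "even (d * n)"
    and p0: "0 \<le> p" and p1: "p \<le> 1"
    and pe: "p * (real d - 1) - 1 \<le> eps0"
    and q1: "(1 - p) * (real d - 1) \<ge> 1/2"
    and q2: "p * (real d - 2) - 1 \<le> - 1 / (2 * (real d - 1))"
    and e0: "0 \<le> eps0"
    and kn: "kn = 4 * real d * (real d - 1) * real n"
    and m: "m \<le> d * n div 2"
    and Gs: "(real d + 1/2) * (real m / kn) \<le> 1 / (4 * (real d - 1))"
    and Gd: "(real m / kn) * real d + real d / kn \<le> 1"
    and th0: "0 \<le> \<theta>" and th1: "\<theta> * (6 * real d) \<le> 1"
    and L: "L \<ge> 1" and mB: "real m \<le> Bd"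
  shows "measure_pmf.prob (expl_traj n d p sel (d * n div 2)) {xs. \<not> real (exc_time (Yproc xs) (2 * L - 1)) \<le> Bd}
     \<le> exp (- \<theta> * (real m * (real m - 1) / (4 * kn) - real m * eps0 - 2 * real d * real L - real d)
            + real m * \<theta>^2 * (6 * real d)^2)"
proof -
  define N where "N = d * n div 2"
  define M where "M = expl_traj n d p sel N"
  define bad where "bad = {xs. \<not> real (exc_time (Yproc xs) (2 * L - 1)) \<le> Bd}"
  have knpos: "kn > 0" using kn n d3 by simp
  have d1: "d \<ge> 1" using d3 by simp
  have mN: "m \<le> N" using m by (simp add: N_def)
  have "measure_pmf.prob M bad = measure_pmf.prob M (bad \<inter> set_pmf M)" by (simp add: measure_Int_set_pmf)
  also have "\<dots> \<le> measure_pmf.prob M {xs. Phi d kn m (take (Suc m) xs) \<ge> - (2 * real d * real L)}"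
  proof (rule measure_pmf.finite_measure_mono)
    show "bad \<inter> set_pmf M \<subseteq> {xs. Phi d kn m (take (Suc m) xs) \<ge> - (2 * real d * real L)}"
    proof
      fix xs assume "xs \<in> bad \<inter> set_pmf M"
      then have "xs \<in> set_pmf (expl_traj n d p sel (d * n div 2))" "\<not> real (exc_time (Yproc xs) (2 * L - 1)) \<le> Bd"
        by (auto simp: M_def N_def bad_def)
      from bad_reduce[OF sel n d1 ev this(1) m L mB this(2)] knpos
      show "xs \<in> {xs. Phi d kn m (take (Suc m) xs) \<ge> - (2 * real d * real L)}" by simp
    qed
  qed simp
  also have "\<dots> = measure_pmf.prob (map_pmf (take (Suc m)) M) {ys. Phi d kn m ys \<ge> - (2 * real d * real L)}"
    by simp
  also have "map_pmf (take (Suc m)) M = expl_traj n d p sel m"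
    using prefix_traj[where m=m and k="N - m" and n=n and d=d and p=p and sel=sel] mN by (simp add: M_def)
  also have "measure_pmf.prob (expl_traj n d p sel m) {ys. Phi d kn m ys \<ge> - (2 * real d * real L)}
      \<le> exp ((\<theta> * real d + (\<Sum>i<m. \<theta> * (eps0 - ((real m - real i - 1) / kn) / 2) + \<theta>^2 * (6 * real d)^2))
             - \<theta> * (- (2 * real d * real L)))"
    by (rule markov_bound[OF th0 supermart[OF sel n d3 ev p0 p1 pe q1 q2 e0 kn _ Gs Gd th0 th1]])
       (use m in auto)
  also have "(\<Sum>i<m. \<theta> * (eps0 - ((real m - real i - 1) / kn) / 2) + \<theta>^2 * (6 * real d)^2)
      = (\<Sum>i<m. \<theta> * eps0 - (\<theta> / (2 * kn)) * (real m - real i - 1) + \<theta>^2 * (6 * real d)^2)"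
    by (intro sum.cong) (simp_all add: algebra_simps)
  also have "\<dots> = real m * (\<theta> * eps0) - (\<theta> / (2 * kn)) * (real m * (real m - 1) / 2) + real m * (\<theta>^2 * (6 * real d)^2)"
    by (rule sum_lin2)
  finally have X: "measure_pmf.prob M bad \<le> exp (\<theta> * real d + (real m * (\<theta> * eps0) - (\<theta> / (2 * kn)) * (real m * (real m - 1) / 2) + real m * (\<theta>^2 * (6 * real d)^2)) - \<theta> * (- (2 * real d * real L)))" .
  have "\<theta> * real d + (real m * (\<theta> * eps0) - (\<theta> / (2 * kn)) * (real m * (real m - 1) / 2) + real m * (\<theta>^2 * (6 * real d)^2)) - \<theta> * (- (2 * real d * real L))
     = - \<theta> * (real m * (real m - 1) / (4 * kn) - real m * eps0 - 2 * real d * real L - real d)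
            + real m * \<theta>^2 * (6 * real d)^2"
    using knpos by (simp add: field_simps)
  note eq = this
  from X have "measure_pmf.prob M bad \<le> exp (- \<theta> * (real m * (real m - 1) / (4 * kn) - real m * eps0 - 2 * real d * real L - real d)
            + real m * \<theta>^2 * (6 * real d)^2)" by (simp only: eq)
  then show ?thesis unfolding M_def N_def bad_def .
qed



lemma core2:
  assumes sel: "valid_sel sel" and n: "n > 0" and d3: "d \<ge> 3" and ev: "even (d * n)"
    and p0: "0 \<le> p" and p1: "p \<le> 1"
    and pe: "p * (real d - 1) - 1 \<le> eps0"
    and q1: "(1 - p) * (real d - 1) \<ge> 1/2"
    and q2: "p * (real d - 2) - 1 \<le> - 1 / (2 * (real d - 1))"
    and e0: "0 \<le> eps0"
    and kn: "kn = 4 * real d * (real d - 1) * real n"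
    and m2: "2 * m \<le> n" and m1: "m \<ge> 1"
    and L: "L \<ge> 1" and mB: "real m \<le> Bd"
    and D: "D = real m * (real m - 1) / (4 * kn) - real m * eps0 - 2 * real d * real L - real d"
    and D0: "D \<ge> 0"
  shows "measure_pmf.prob (expl_traj n d p sel (d * n div 2)) {xs. \<not> real (exc_time (Yproc xs) (2 * L - 1)) \<le> Bd}
     \<le> exp (- (D^2 / (4 * real m * (6 * real d)^2)))"
proof -
  define M where "M = 6 * real d"
  define \<theta> where "\<theta> = D / (2 * real m * M^2)"
  have Mpos: "M > 0" using d3 by (simp add: M_def)
  have mpos: "real m > 0" using m1 by simp
  have knpos: "kn > 0" using kn n d3 by simp
  have dd: "real d - 1 \<ge> 2" using d3 by simp
  have kn_ge: "kn \<ge> 8 * real d * real n"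
  proof -
    have "8 * real d * real n = 4 * real d * 2 * real n" by simp
    also have "\<dots> \<le> 4 * real d * (real d - 1) * real n" using dd by (intro mult_right_mono mult_left_mono) auto
    finally show ?thesis using kn by simp
  qed
  have mkn: "real m \<le> kn"
  proof -
    have "real m \<le> real n" using m2 by simp
    also have "\<dots> \<le> (8 * real d) * real n" using d3 by (intro mult_right_mono[of 1 "8 * real d" "real n", simplified]) auto
    finally show ?thesis using kn_ge by simp
  qed
  have Dle: "D \<le> real m / 4"
  proof -
    have "real m * (real m - 1) / (4 * kn) \<le> real m * real m / (4 * kn)"
      using knpos mpos by (intro divide_right_mono mult_left_mono) auto
    also have "\<dots> \<le> real m * kn / (4 * kn)"
      using knpos mpos mkn by (intro divide_right_mono mult_left_mono) auto
    also have "\<dots> = real m / 4" using knpos by simp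
    finally have "real m * (real m - 1) / (4 * kn) \<le> real m / 4" .
    moreover have "real m * eps0 \<ge> 0" using e0 by simp
    moreover have "2 * real d * real L \<ge> 0" by simp
    ultimately show ?thesis using D by linarith
  qed
  have th0: "0 \<le> \<theta>" using D0 mpos Mpos by (simp add: \<theta>_def)
  have th1: "\<theta> * (6 * real d) \<le> 1"
  proof -
    have "\<theta> * M = D / (2 * real m * M)" using Mpos by (simp add: \<theta>_def power2_eq_square field_simps)
    also have "\<dots> \<le> (real m / 4) / (2 * real m * M)" using Dle mpos Mpos by (intro divide_right_mono) auto
    also have "\<dots> = 1 / (8 * M)" using mpos by (simp add: field_simps)
    also have "\<dots> \<le> 1" using Mpos d3 by (simp add: M_def field_simps)
    finally show ?thesis by (simp add: M_def)
  qed
  have mN: "m \<le> d * n div 2"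
  proof -
    have "2 * m \<le> 2 * n" using m2 by simp
    also have "2 * n \<le> d * n" using d3 by simp
    finally show ?thesis by linarith
  qed
  have Gs: "(real d + 1/2) * (real m / kn) \<le> 1 / (4 * (real d - 1))"
  proof -
    have "(real d + 1/2) * (real m / kn) = (real d + 1/2) * real m / (4 * real d * (real d - 1) * real n)"
      using kn by simp
    also have "\<dots> \<le> (real d * real n) / (4 * real d * (real d - 1) * real n)"
    proof (rule divide_right_mono)
      have "(real d + 1/2) * real m \<le> (real d + 1/2) * (real n / 2)" using m2 by (intro mult_left_mono) auto
      also have "\<dots> \<le> real d * real n"
      proof -
        have "3 * real n \<le> real d * real n" using d3 by (intro mult_right_mono) auto
        then show ?thesis by (simp add: algebra_simps)
      qed
      finally show "(real d + 1/2) * real m \<le> real d * real n" .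
    qed (use dd in auto)
    also have "\<dots> = 1 / (4 * (real d - 1))" using n d3 by (simp add: field_simps)
    finally show ?thesis .
  qed
  have Gd: "(real m / kn) * real d + real d / kn \<le> 1"
  proof -
    have "(real m / kn) * real d + real d / kn = (real m + 1) * real d / kn" using knpos by (simp add: field_simps)
    also have "\<dots> \<le> (8 * real n) * real d / kn"
      using m1 m2 knpos by (intro divide_right_mono mult_right_mono) auto
    also have "\<dots> \<le> 1" using kn_ge knpos by (simp add: field_simps)
    finally show ?thesis .
  qed
  have "measure_pmf.prob (expl_traj n d p sel (d * n div 2)) {xs. \<not> real (exc_time (Yproc xs) (2 * L - 1)) \<le> Bd}
     \<le> exp (- \<theta> * D + real m * \<theta>^2 * M^2)"
    using core_bound[OF sel n d3 ev p0 p1 pe q1 q2 e0 kn mN Gs Gd th0 th1 L mB] by (simp add: D M_def)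
  also have "- \<theta> * D + real m * \<theta>^2 * M^2 = - (D^2 / (4 * real m * M^2))"
    using mpos Mpos by (simp add: \<theta>_def power2_eq_square field_simps)
  finally show ?thesis by (simp add: M_def)
qed



lemma floor_half: "(y::real) \<ge> 1 \<Longrightarrow> real (nat \<lfloor>y\<rfloor>) \<ge> y / 2 \<and> real (nat \<lfloor>y\<rfloor>) \<le> y \<and> nat \<lfloor>y\<rfloor> \<ge> 1"
proof -
  assume y: "y \<ge> 1"
  have f0: "\<lfloor>y\<rfloor> \<ge> 1" using y by (simp add: le_floor_iff)
  then have r: "real (nat \<lfloor>y\<rfloor>) = real_of_int \<lfloor>y\<rfloor>" by simp
  have "real_of_int \<lfloor>y\<rfloor> > y - 1" by simp
  moreover have "real_of_int \<lfloor>y\<rfloor> \<ge> 1" using f0 by simp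
  ultimately have "real_of_int \<lfloor>y\<rfloor> \<ge> y / 2" by linarith
  then show ?thesis using r f0 by simp
qed

lemma sq_le_imp: "(u::real) \<ge> 0 \<Longrightarrow> v \<ge> 0 \<Longrightarrow> u^2 \<le> v^2 \<Longrightarrow> u \<le> v"
  using power2_le_imp_le by blast

lemma asym:
  fixes d n :: nat and z A B lam K :: real
  assumes d3: "d \<ge> 3" and z0: "z > 0" and nz: "real n = z^6"
    and A0: "A \<ge> (2048 * (real d)^2 * \<bar>lam\<bar>)^2 + 1" and AK: "A \<le> K * z"
    and B0: "B \<ge> 128 * real d"
    and z1: "z^3 \<ge> K" and z2: "z^2 \<ge> 8" and z3: "z^2 \<ge> 2 * real d * \<bar>lam\<bar>" and z4: "4 * z^3 \<ge> B^2 * (real d)^2 * K"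
  defines "Tp \<equiv> nat \<lceil>z^4 / A\<rceil>"
  defines "T \<equiv> (d - 1) * Tp"
  defines "L \<equiv> nat \<lfloor>real (d * n) / (4 * real T)\<rfloor>"
  defines "m \<equiv> nat \<lfloor>B * real L * sqrt (real T)\<rfloor>"
  defines "eps0 \<equiv> \<bar>lam\<bar> / z^2"
  defines "kn \<equiv> 4 * real d * (real d - 1) * real n"
  defines "D \<equiv> real m * (real m - 1) / (4 * kn) - real m * eps0 - 2 * real d * real L - real d"
  shows "2 * m \<le> n" "m \<ge> 1" "L \<ge> 1" "real m \<le> B * real L * sqrt (real T)" "D \<ge> 0"
    "D^2 / (4 * real m * (6 * real d)^2) \<ge> A * sqrt A / (4096 * 36864 * 16 * (real d)^6)"
proof -
  have dge: "real d \<ge> 3" using d3 by simp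
  have A1: "A \<ge> 1"
  proof -
    have "(2048 * (real d)^2 * \<bar>lam\<bar>)^2 \<ge> 0" by simp
    then show ?thesis using A0 by linarith
  qed
  have Kpos: "K > 0"
  proof -
    have "K * z > 0" using AK A1 by linarith
    then show ?thesis using z0 by (simp add: zero_less_mult_iff)
  qed
  define q where "q = z^4 / A"
  have q1: "q \<ge> 1"
  proof -
    have "K * z \<le> z^3 * z" using z1 z0 by (intro mult_right_mono) auto
    also have "z^3 * z = z^4" by (simp add: power_Suc2[symmetric])
    finally have "A \<le> z^4" using AK by linarith
    then show ?thesis using A1 by (simp add: q_def)
  qed
  have tp: "real Tp \<ge> q" "real Tp \<le> 2 * q"
  proof -
    have c: "real Tp = real_of_int \<lceil>q\<rceil>" using q1 by (simp add: Tp_def q_def[symmetric])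
    show "real Tp \<ge> q" using c by simp
    have "real_of_int \<lceil>q\<rceil> \<le> q + 1" by simp
    then show "real Tp \<le> 2 * q" using c q1 by linarith
  qed
  define Tr where "Tr = real T"
  have Trd: "Tr = (real d - 1) * real Tp" using d3 by (simp add: Tr_def T_def of_nat_diff)
  have Tr_lo: "Tr \<ge> (real d - 1) * q" using Trd tp dge by (simp add: mult_left_mono)
  have Tr_hi: "Tr \<le> 2 * real d * q"
  proof -
    have "Tr \<le> (real d - 1) * (2 * q)" using Trd tp dge by (simp add: mult_left_mono)
    also have "\<dots> \<le> real d * (2 * q)" using q1 by (intro mult_right_mono) auto
    also have "\<dots> = 2 * real d * q" by simp
    finally show ?thesis .
  qed
  have qpos: "q > 0" using q1 by simp
  have Trpos: "Tr > 0"
  proof -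
    have "(real d - 1) * q > 0" using dge qpos by simp
    then show ?thesis using Tr_lo by linarith
  qed
  define ell where "ell = real (d * n) / (4 * Tr)"
  have ellTr: "ell * Tr = real d * z^6 / 4" using Trpos nz by (simp add: ell_def)
  have ell1: "ell \<ge> 1"
  proof -
    have "4 * Tr \<le> 8 * real d * q" using Tr_hi by linarith
    also have "\<dots> = 8 * real d * z^4 / A" by (simp add: q_def)
    also have "\<dots> \<le> real d * z^6"
    proof -
      have "8 * z^4 \<le> z^2 * z^4" using z2 by (intro mult_right_mono) auto
      also have "z^2 * z^4 = z^6" by (simp add: power_add[symmetric])
      finally have "8 * z^4 \<le> z^6" .
      also have "\<dots> \<le> A * z^6" using A1 by (simp add: mult_le_cancel_right1)
      finally have "8 * z^4 \<le> A * z^6" .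
      then have "8 * z^4 / A \<le> z^6" using A1 by (simp add: divide_le_eq mult.commute)
      then have "real d * (8 * z^4 / A) \<le> real d * z^6" by (intro mult_left_mono) auto
      moreover have "real d * (8 * z^4 / A) = 8 * real d * z^4 / A" by simp
      ultimately show ?thesis by linarith
    qed
    finally have "4 * Tr \<le> real d * z^6" .
    then show ?thesis using Trpos nz by (simp add: ell_def field_simps)
  qed
  have Ldef: "L = nat \<lfloor>ell\<rfloor>" by (simp add: L_def ell_def Tr_def)
  note Lf = floor_half[OF ell1, folded Ldef]
  show L1: "L \<ge> 1" using Lf by simp
  define Lr where "Lr = real L"
  have LTlo: "Lr * Tr \<ge> real d * z^6 / 8"
  proof -
    have "(ell / 2) * Tr \<le> Lr * Tr" using Lf Trpos by (intro mult_right_mono) (auto simp: Lr_def)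
    then show ?thesis using ellTr by simp
  qed
  have LThi: "Lr * Tr \<le> real d * z^6 / 4"
  proof -
    have "Lr * Tr \<le> ell * Tr" using Lf Trpos by (intro mult_right_mono) (auto simp: Lr_def)
    then show ?thesis using ellTr by simp
  qed
  define s where "s = sqrt Tr"
  have s2: "s^2 = Tr" using Trpos by (simp add: s_def)
  have spos: "s > 0" using Trpos by (simp add: s_def)
  define Bd where "Bd = B * Lr * s"
  have Bpos: "B > 0" using B0 dge by simp
  have Lrpos: "Lr \<ge> 1" using L1 by (simp add: Lr_def)
  have Bdpos: "Bd > 0" using Bpos Lrpos spos by (simp add: Bd_def)
  have Bd2: "Bd^2 = B^2 * (Lr * Tr)^2 / Tr" using s2 Trpos by (simp add: Bd_def power_mult_distrib power2_eq_square field_simps)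
  define a where "a = sqrt A"
  have a2: "a^2 = A" using A1 by (simp add: a_def)
  have apos: "a \<ge> 1" using A1 by (simp add: a_def)
  have Lrpos0: "Lr \<ge> 0" by (simp add: Lr_def)
  have z4ge: "z^4 \<ge> 64"
  proof -
    have "8 * 8 \<le> z^2 * z^2" using z2 by (intro mult_mono) auto
    also have "z^2 * z^2 = z^4" by (simp add: power_add[symmetric])
    finally show ?thesis by simp
  qed
  have Ba1: "B * a \<ge> 1"
  proof -
    have "1 * 1 \<le> B * a" using B0 apos dge by (intro mult_mono) auto
    then show ?thesis by simp
  qed
  
  have Bd_hi: "Bd \<le> z^6 / 2"
  proof (rule sq_le_imp)
    show "Bd \<ge> 0" using Bdpos by simp
    show "z^6 / 2 \<ge> 0" using z0 by simp
    have "Bd^2 \<le> B^2 * (real d * z^6 / 4)^2 / Tr"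
    proof -
      have "(Lr * Tr)^2 \<le> (real d * z^6 / 4)^2" using LThi Trpos Lrpos0 by (intro power_mono) auto
      then have "B^2 * (Lr * Tr)^2 \<le> B^2 * (real d * z^6 / 4)^2" by (intro mult_left_mono) auto
      then show ?thesis unfolding Bd2 using Trpos by (intro divide_right_mono) auto
    qed
    also have "\<dots> \<le> B^2 * (real d * z^6 / 4)^2 / (z^4 / A)"
    proof (rule divide_left_mono)
      have "(real d - 1) * q \<ge> 1 * q" using dge qpos by (intro mult_right_mono) auto
      then show "z^4 / A \<le> Tr" using Tr_lo by (simp add: q_def)
      show "0 \<le> B^2 * (real d * z^6 / 4)^2" by simp
      show "0 < Tr * (z^4 / A)" using Trpos z0 A1 by simp
    qed
    also have "\<dots> = B^2 * (real d)^2 * A * z^8 / 16" using z0 A1 by (simp add: field_simps power_mult_distrib; simp add: power2_eq_square power_add[symmetric])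
    also have "\<dots> \<le> B^2 * (real d)^2 * (K * z) * z^8 / 16"
      using AK by (intro divide_right_mono mult_right_mono mult_left_mono) auto
    also have "\<dots> = (B^2 * (real d)^2 * K) * z^9 / 16"
    proof -
      have z9: "z^9 = z * z^8" by (simp add: eval_nat_numeral)
      show ?thesis by (simp add: z9 algebra_simps)
    qed
    also have "\<dots> \<le> (4 * z^3) * z^9 / 16" using z4 z0 by (intro divide_right_mono mult_right_mono) auto
    also have "\<dots> = (z^6 / 2)^2" by (simp add: power2_eq_square power_add[symmetric] field_simps)
    finally show "Bd^2 \<le> (z^6 / 2)^2" .
  qed
  have mdef: "m = nat \<lfloor>Bd\<rfloor>" by (simp add: m_def Bd_def Lr_def s_def Tr_def)
  
  have Bd_lo: "Bd \<ge> B * a * z^4 / 8"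
  proof (rule sq_le_imp)
    show "B * a * z^4 / 8 \<ge> 0" using Bpos apos z0 by simp
    show "Bd \<ge> 0" using Bdpos by simp
    have "B^2 * (real d * z^6 / 8)^2 / Tr \<le> Bd^2"
      unfolding Bd2 using LTlo Trpos Bpos dge z0
      by (intro divide_right_mono mult_left_mono power_mono) auto
    moreover have "B^2 * (real d * z^6 / 8)^2 / (2 * real d * (z^4 / A)) \<le> B^2 * (real d * z^6 / 8)^2 / Tr"
      using Tr_hi Trpos z0 A1 dge by (intro divide_left_mono) (auto simp: q_def)
    moreover have "B^2 * (real d * z^6 / 8)^2 / (2 * real d * (z^4 / A)) = B^2 * real d * A * z^8 / 128"
      using z0 A1 dge by (simp add: field_simps power_mult_distrib; simp add: power2_eq_square power_add[symmetric])
    moreover have "(B * a * z^4 / 8)^2 \<le> B^2 * real d * A * z^8 / 128"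
    proof -
      have "(B * a * z^4 / 8)^2 = B^2 * A * z^8 / 64" using a2 by (simp add: power_mult_distrib power2_eq_square power_add[symmetric] field_simps)
      also have "\<dots> \<le> B^2 * real d * A * z^8 / 128"
      proof -
        have "2 * (B^2 * A * z^8) \<le> real d * (B^2 * A * z^8)" using dge A1 by (intro mult_right_mono) auto
        then show ?thesis by (simp add: field_simps)
      qed
      finally show ?thesis .
    qed
    ultimately show "(B * a * z^4 / 8)^2 \<le> Bd^2" by linarith
  qed
  have Bd1: "Bd \<ge> 1"
  proof -
    have "B * a * z^4 / 8 \<ge> 1"
    proof -
      have "z^4 \<ge> 64" using z4ge .
      moreover have "B * a \<ge> 1" using Ba1 .
      ultimately have "B * a * z^4 \<ge> 1 * 64" by (intro mult_mono) auto
      then show ?thesis by simp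
    qed
    then show ?thesis using Bd_lo by simp
  qed
  note mf = floor_half[OF Bd1, folded mdef]
  have mr_lo: "real m \<ge> B * a * z^4 / 16" using mf Bd_lo by simp
  show "real m \<le> B * real L * sqrt (real T)" using mf by (simp add: Bd_def Lr_def s_def Tr_def)
  show m2: "2 * m \<le> n"
  proof -
    have "2 * real m \<le> z^6" using mf Bd_hi by simp
    then show ?thesis using nz by (metis of_nat_le_iff of_nat_mult of_nat_numeral)
  qed
  have mr2: "real m \<ge> 2"
  proof -
    have "z^4 \<ge> 64" using z4ge .
    moreover have "B * a \<ge> 1" using Ba1 .
    ultimately have "B * a * z^4 \<ge> 1 * 64" by (intro mult_mono) auto
    then show ?thesis using mr_lo by simp
  qed
  show "m \<ge> 1" using mr2 by simp
  define mr where "mr = real m"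
  have mrpos: "mr > 0" using mr2 by (simp add: mr_def)
  have kn_eq: "kn = 4 * real d * (real d - 1) * z^6" by (simp add: kn_def nz)
  have knpos: "kn > 0" using dge z0 by (simp add: kn_eq)
  have kn_le: "kn \<le> 4 * (real d)^2 * z^6"
  proof -
    have "4 * real d * (real d - 1) \<le> 4 * real d * real d" using dge by (intro mult_left_mono) auto
    then have "4 * real d * (real d - 1) * z^6 \<le> 4 * real d * real d * z^6" using z0 by (intro mult_right_mono) auto
    then show ?thesis by (simp add: kn_eq power2_eq_square)
  qed
  have Bd2': "Bd^2 = B^2 * Lr * (Lr * Tr)" using s2 by (simp add: Bd_def power_mult_distrib power2_eq_square)
  have mr_sq: "mr^2 \<ge> B^2 * Lr * real d * z^6 / 32"
  proof -
    have "Bd / 2 \<le> mr" using mf by (simp add: mr_def)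
    then have "(Bd / 2)^2 \<le> mr^2" using Bdpos by (intro power_mono) auto
    moreover have "B^2 * Lr * (real d * z^6 / 8) \<le> Bd^2" unfolding Bd2' using LTlo Lrpos0
      by (intro mult_left_mono) auto
    ultimately show ?thesis by (simp add: power_divide)
  qed
  have B2: "B^2 \<ge> 16384 * (real d)^2"
  proof -
    have "(128 * real d)^2 \<le> B^2" using B0 dge by (intro power_mono) auto
    then show ?thesis by (simp add: power_mult_distrib)
  qed
  have t1: "2 * real d * Lr + real d \<le> mr^2 / (32 * kn)"
  proof -
    have "128 * real d * Lr * kn \<le> 128 * real d * Lr * (4 * (real d)^2 * z^6)"
      using kn_le Lrpos0 dge by (intro mult_left_mono) auto
    also have "\<dots> = (16384 * (real d)^2) * Lr * real d * z^6 / 32" by (simp add: power2_eq_square)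
    also have "\<dots> \<le> B^2 * Lr * real d * z^6 / 32" using B2 Lrpos0 dge z0
      by (intro divide_right_mono mult_right_mono) auto
    also have "\<dots> \<le> mr^2" by (rule mr_sq)
    finally have "128 * real d * Lr * kn \<le> mr^2" .
    then have "4 * real d * Lr \<le> mr^2 / (32 * kn)" using knpos by (simp add: field_simps)
    moreover have "real d \<le> 2 * real d * Lr" using Lrpos dge by (simp add: mult_le_cancel_left1)
    ultimately show ?thesis by linarith
  qed
  have a_lo: "a \<ge> 2048 * (real d)^2 * \<bar>lam\<bar>"
  proof -
    have "(2048 * (real d)^2 * \<bar>lam\<bar>)^2 \<le> A" using A0 by linarith
    then show ?thesis unfolding a_def by (rule real_le_rsqrt)
  qed
  have t2: "mr * eps0 \<le> mr^2 / (32 * kn)"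
  proof -
    have "eps0 * (32 * kn) \<le> mr"
    proof -
      have "eps0 * (32 * kn) \<le> \<bar>lam\<bar> / z^2 * (32 * (4 * (real d)^2 * z^6))"
        unfolding eps0_def using kn_le z0 by (intro mult_left_mono) auto
      also have "\<dots> = 128 * (real d)^2 * \<bar>lam\<bar> * z^4" using z0
        by (simp add: field_simps power_add[symmetric] eval_nat_numeral)
      also have "\<dots> \<le> 8 * real d * a * z^4"
      proof -
        have "128 * (real d)^2 * \<bar>lam\<bar> * 1 \<le> 128 * (real d)^2 * \<bar>lam\<bar> * (128 * real d)"
          using dge by (intro mult_left_mono) auto
        then have "128 * (real d)^2 * \<bar>lam\<bar> \<le> 8 * real d * (2048 * (real d)^2 * \<bar>lam\<bar>)"
          by (simp add: algebra_simps)
        also have "\<dots> \<le> 8 * real d * a" using a_lo dge by (intro mult_left_mono) auto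
        finally show ?thesis using z0 by (intro mult_right_mono) auto
      qed
      also have "\<dots> \<le> B * a * z^4 / 16"
      proof -
        have "(128 * real d) * (a * z^4) \<le> B * (a * z^4)" using B0 apos z0 by (intro mult_right_mono) auto
        then show ?thesis by (simp add: field_simps)
      qed
      also have "\<dots> \<le> mr" using mr_lo by (simp add: mr_def)
      finally show ?thesis .
    qed
    then have "mr * (eps0 * (32 * kn)) \<le> mr * mr" using mrpos by (intro mult_left_mono) auto
    then show ?thesis using knpos by (simp add: field_simps power2_eq_square)
  qed
  have t0: "mr * (mr - 1) / (4 * kn) \<ge> mr^2 / (8 * kn)"
  proof -
    have "2 * mr \<le> mr * mr" using mr2 mrpos by (intro mult_right_mono) (auto simp: mr_def)
    then have "mr^2 / 2 \<le> mr * (mr - 1)" by (simp add: power2_eq_square algebra_simps)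
    then have "(mr^2 / 2) / (4 * kn) \<le> mr * (mr - 1) / (4 * kn)" using knpos by (intro divide_right_mono) auto
    then show ?thesis by simp
  qed
  have Dge: "D \<ge> mr^2 / (16 * kn)"
  proof -
    have "D = mr * (mr - 1) / (4 * kn) - mr * eps0 - (2 * real d * Lr + real d)"
      by (simp add: D_def mr_def Lr_def)
    moreover have "mr^2 / (8 * kn) - mr^2 / (32 * kn) - mr^2 / (32 * kn) = mr^2 / (16 * kn)"
      using knpos by (simp add: field_simps)
    ultimately show ?thesis using t0 t1 t2 by linarith
  qed
  show "D \<ge> 0" using Dge knpos by (smt (verit) divide_nonneg_pos zero_le_power2)
  show "D^2 / (4 * real m * (6 * real d)^2) \<ge> A * sqrt A / (4096 * 36864 * 16 * (real d)^6)"
  proof -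
    have D2ge: "D^2 \<ge> (mr^2 / (16 * kn))^2" using Dge knpos by (intro power_mono) auto
    have "D^2 / (4 * mr * (6 * real d)^2) \<ge> (mr^2 / (16 * kn))^2 / (4 * mr * (6 * real d)^2)"
      using D2ge mrpos dge by (intro divide_right_mono) auto
    also have "(mr^2 / (16 * kn))^2 / (4 * mr * (6 * real d)^2) = mr^3 / (36864 * (real d)^2 * kn^2)"
      using mrpos knpos dge by (simp add: field_simps power2_eq_square power3_eq_cube)
    also have "mr^3 / (36864 * (real d)^2 * kn^2) \<ge> mr^3 / (36864 * (real d)^2 * (16 * (real d)^4 * z^12))"
    proof (rule divide_left_mono)
      have "kn^2 \<le> (4 * (real d)^2 * z^6)^2" using kn_le knpos by (intro power_mono) auto
      also have "\<dots> = 16 * (real d)^4 * z^12" by (simp add: power_mult_distrib power2_eq_square power_add[symmetric] eval_nat_numeral)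
      finally have k2: "kn^2 \<le> 16 * (real d)^4 * z^12" .
      show "36864 * (real d)^2 * kn^2 \<le> 36864 * (real d)^2 * (16 * (real d)^4 * z^12)"
        by (rule mult_left_mono[OF k2]) simp
      show "0 \<le> mr^3" using mrpos by simp
      show "0 < 36864 * (real d)^2 * (16 * (real d)^4 * z^12) * (36864 * (real d)^2 * kn^2)"
        using knpos dge z0 by simp
    qed
    also have "mr^3 / (36864 * (real d)^2 * (16 * (real d)^4 * z^12)) \<ge> (a * z^4 / 16)^3 / (36864 * (real d)^2 * (16 * (real d)^4 * z^12))"
    proof (rule divide_right_mono)
      have "a * z^4 / 16 \<le> mr"
      proof -
        have "1 * (a * z^4) \<le> B * (a * z^4)" using B0 dge apos z0 by (intro mult_right_mono) auto
        then show ?thesis using mr_lo by (simp add: mr_def)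
      qed
      then show "(a * z^4 / 16)^3 \<le> mr^3" using apos z0 by (intro power_mono) auto
    qed (use dge z0 in simp)
    also have "(a * z^4 / 16)^3 / (36864 * (real d)^2 * (16 * (real d)^4 * z^12)) = a^3 / (4096 * 36864 * 16 * (real d)^6)"
      using z0 dge by (simp add: field_simps power_mult_distrib power_add[symmetric] eval_nat_numeral)
    also have "a^3 = A * sqrt A" using a2 by (simp add: a_def power3_eq_cube power2_eq_square)
    finally show ?thesis by (simp add: mr_def)
  qed
qed



lemma powr6: "(x::real) > 0 \<Longrightarrow> (x powr (1/6))^k = x powr (real k / 6)"
proof -
  assume x: "x > 0"
  have "(x powr (1/6))^k = (x powr (1/6)) powr (real k)" using x by (simp add: powr_realpow)
  also have "\<dots> = x powr (real k / 6)" by (simp add: powr_powr)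
  finally show ?thesis .
qed

lemma final_n:
  fixes d n :: nat and lam A B K :: real and sel
  assumes d3: "d \<ge> 3" and n: "n > 0" and ev: "even (d * n)" and sel: "valid_sel sel"
    and A0: "A \<ge> (2048 * (real d)^2 * \<bar>lam\<bar>)^2 + 1" and AK: "A \<le> K * real n powr (1/6)"
    and B0: "B \<ge> 128 * real d"
    and zbig: "real n powr (1/6) \<ge> K + 8 + 2 * real d * \<bar>lam\<bar> + B^2 * (real d)^2 * K" and K0: "K > 0"
  shows "measure_pmf.prob (expl_process n d (perc_p d lam n) sel) (- G_event d A B n)
     \<le> exp (- (1 / (4096 * 36864 * 16 * (real d)^6)) * A powr (3/2))"
proof -
  define z where "z = real n powr (1/6)"
  have npos: "real n > 0" using n by simp
  have z0: "z > 0" using npos by (simp add: z_def)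
  have nz: "real n = z^6" using powr6[OF npos, of 6] npos by (simp add: z_def)
  have z4: "real n powr (2/3) = z^4" using powr6[OF npos, of 4] by (simp add: z_def)
  have z2: "real n powr (-1/3) = 1 / z^2"
  proof -
    have "z^2 = real n powr (1/3)" using powr6[OF npos, of 2] by (simp add: z_def)
    then show ?thesis by (simp add: powr_minus_divide)
  qed
  have z2': "real n powr (- (1/3)) = 1 / z^2" using z2 by simp
  have dge: "real d \<ge> 3" using d3 by simp
  have Zp: "K + 8 + 2 * real d * \<bar>lam\<bar> + B^2 * (real d)^2 * K \<le> z" using zbig by (simp add: z_def)
  have k0: "K \<ge> 0" "2 * real d * \<bar>lam\<bar> \<ge> 0" "B^2 * (real d)^2 * K \<ge> 0" using K0 by auto
  have z1: "z \<ge> 1" using Zp k0 by linarith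
  have zz2: "z^2 \<ge> z" using z1 by (simp add: power2_eq_square)
  have zz3: "z^3 \<ge> z" using z1 by (metis power_increasing_iff le_numeral_extra(4) one_le_numeral power_one_right less_one not_less order_trans linorder_le_cases zero_less_one power_increasing[of 1 3 z] numeral_le_iff semiring_norm(70))
  have c1: "z^3 \<ge> K" using zz3 Zp k0 by linarith
  have c2: "z^2 \<ge> 8" using zz2 Zp k0 by linarith
  have c3: "z^2 \<ge> 2 * real d * \<bar>lam\<bar>" using zz2 Zp k0 by linarith
  have c4: "4 * z^3 \<ge> B^2 * (real d)^2 * K" using zz3 Zp k0 by linarith
  have AK': "A \<le> K * z" using AK by (simp add: z_def)
  note as = asym[OF d3 z0 nz A0 AK' B0 c1 c2 c3 c4]
  define Tp where "Tp = nat \<lceil>z^4 / A\<rceil>"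
  define T where "T = (d - 1) * Tp"
  define L where "L = nat \<lfloor>real (d * n) / (4 * real T)\<rfloor>"
  define m where "m = nat \<lfloor>B * real L * sqrt (real T)\<rfloor>"
  define eps0 where "eps0 = \<bar>lam\<bar> / z^2"
  define kn where "kn = 4 * real d * (real d - 1) * real n"
  define D where "D = real m * (real m - 1) / (4 * kn) - real m * eps0 - 2 * real d * real L - real d"
  have TT: "T_par d A n = T" by (simp add: T_par_def T'_par_def T_def Tp_def z4)
  have LL: "L_par d A n = L" by (simp add: L_par_def TT L_def)
  define p where "p = perc_p d lam n"
  define \<epsilon> where "\<epsilon> = lam / z^2"
  have pdef: "p = (1 + \<epsilon>) / (real d - 1)" unfolding p_def perc_p_def \<epsilon>_def z2 by simp
  have eps_abs: "\<bar>\<epsilon>\<bar> \<le> 1 / (2 * real d)"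
  proof -
    have "\<bar>\<epsilon>\<bar> = \<bar>lam\<bar> / z^2" using z0 by (simp add: \<epsilon>_def abs_divide)
    also have "\<dots> \<le> \<bar>lam\<bar> / (2 * real d * \<bar>lam\<bar>)" if "lam \<noteq> 0"
      using c3 that dge z0 by (intro divide_left_mono) auto
    finally show ?thesis using dge by (cases "lam = 0") (auto simp: \<epsilon>_def)
  qed
  have eps_le: "\<bar>\<epsilon>\<bar> \<le> 1/6" using eps_abs dge by (smt (verit) divide_left_mono mult_pos_pos)
  have dm1: "real d - 1 > 0" using dge by simp
  have p0: "0 \<le> p" using eps_le dm1 by (simp add: pdef)
  have p1: "p \<le> 1" using eps_le dm1 dge by (simp add: pdef divide_le_eq)
  have pd: "p * (real d - 1) = 1 + \<epsilon>" using dm1 by (simp add: pdef)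
  have pe: "p * (real d - 1) - 1 \<le> eps0"
  proof -
    have "lam / z^2 \<le> \<bar>lam\<bar> / z^2" using z0 by (intro divide_right_mono) auto
    then show ?thesis using pd by (simp add: eps0_def \<epsilon>_def)
  qed
  have q1: "(1 - p) * (real d - 1) \<ge> 1/2" using pd eps_le dge by (simp add: algebra_simps)
  have q2: "p * (real d - 2) - 1 \<le> - 1 / (2 * (real d - 1))"
  proof -
    have "\<epsilon> * (real d - 2) \<le> \<bar>\<epsilon>\<bar> * real d" using dge by (smt (verit) abs_ge_self mult_mono abs_ge_zero)
    also have "\<dots> \<le> 1 / (2 * real d) * real d" using eps_abs dge by (intro mult_right_mono) auto
    also have "\<dots> = 1/2" using dge by simp
    finally have h: "\<epsilon> * (real d - 2) \<le> 1/2" .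
    have "p * (real d - 2) - 1 = (\<epsilon> * (real d - 2) - 1) / (real d - 1)"
      using dm1 by (simp add: pdef field_simps)
    also have "\<dots> \<le> (- 1/2) / (real d - 1)" using h dm1 by (intro divide_right_mono) auto
    finally show ?thesis by simp
  qed
  have e0: "0 \<le> eps0" by (simp add: eps0_def)
  have "measure_pmf.prob (expl_traj n d p sel (d * n div 2)) {xs. \<not> real (exc_time (Yproc xs) (2 * L - 1)) \<le> B * real L * sqrt (real T)}
     \<le> exp (- (D^2 / (4 * real m * (6 * real d)^2)))"
    by (rule core2[OF sel n d3 ev p0 p1 pe q1 q2 e0 kn_def _ _ _ _ D_def])
      (use as in \<open>simp_all add: m_def L_def T_def Tp_def eps0_def kn_def D_def\<close>)
  also have "\<dots> \<le> exp (- (A * sqrt A / (4096 * 36864 * 16 * (real d)^6)))"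
    using as(6) by (simp add: m_def L_def T_def Tp_def eps0_def kn_def D_def)
  also have "A * sqrt A = A powr (3/2)"
  proof -
    have "A > 0" using A0 by (smt (verit) zero_le_power2)
    have e: "(3/2::real) = 1 + 1/2" by simp
    have "A powr (1 + 1/2) = A powr 1 * A powr (1/2)" by (rule powr_add)
    also have "\<dots> = A * sqrt A" using \<open>A > 0\<close> by (simp add: powr_half_sqrt)
    finally show ?thesis unfolding e by simp
  qed
  finally show ?thesis
    by (simp add: expl_process_def G_event_def TT LL p_def Compl_eq set_diff_eq) 
qed



theorem proposition3:
  fixes d :: nat
  assumes "d \<ge> 3"
  shows "\<exists>B0>0. \<forall>lam :: real. \<exists>A0>0. \<forall>B\<ge>B0. \<exists>c>0.
     \<forall>(Af :: nat \<Rightarrow> real) (sel :: nat \<Rightarrow> expl_state list \<Rightarrow> stub).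
       (\<forall>n. Af n \<ge> A0) \<longrightarrow> Af \<in> O(\<lambda>n. real n powr (1/6)) \<longrightarrow> (\<forall>n. valid_sel (sel n)) \<longrightarrow>
       (\<forall>\<^sub>F n in sequentially. even (d * n) \<longrightarrow>
          measure_pmf.prob (expl_process n d (perc_p d lam n) (sel n)) (- G_event d (Af n) B n)
            \<le> exp (- c * Af n powr (3/2)))"
proof -
  have d3: "d \<ge> 3" by (rule assms)
  have B0pos: "128 * real d > 0" using d3 by simp
  show ?thesis
  proof (rule exI[of _ "128 * real d"], rule conjI[OF B0pos], rule allI)
    fix lam :: real
    define A0 where "A0 = (2048 * (real d)^2 * \<bar>lam\<bar>)^2 + 1"
    have A0pos: "A0 > 0" by (simp add: A0_def add_nonneg_pos)
    show "\<exists>A0>0. \<forall>B\<ge>128 * real d. \<exists>c>0.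
     \<forall>(Af :: nat \<Rightarrow> real) (sel :: nat \<Rightarrow> expl_state list \<Rightarrow> stub).
       (\<forall>n. Af n \<ge> A0) \<longrightarrow> Af \<in> O(\<lambda>n. real n powr (1/6)) \<longrightarrow> (\<forall>n. valid_sel (sel n)) \<longrightarrow>
       (\<forall>\<^sub>F n in sequentially. even (d * n) \<longrightarrow>
          measure_pmf.prob (expl_process n d (perc_p d lam n) (sel n)) (- G_event d (Af n) B n)
            \<le> exp (- c * Af n powr (3/2)))"
    proof (rule exI[of _ A0], rule conjI[OF A0pos], intro allI impI)
      fix B :: real assume B0: "B \<ge> 128 * real d"
      define c where "c = 1 / (4096 * 36864 * 16 * (real d)^6)"
      have cpos: "c > 0" using d3 by (simp add: c_def)
      show "\<exists>c>0. \<forall>(Af :: nat \<Rightarrow> real) (sel :: nat \<Rightarrow> expl_state list \<Rightarrow> stub).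
       (\<forall>n. Af n \<ge> A0) \<longrightarrow> Af \<in> O(\<lambda>n. real n powr (1/6)) \<longrightarrow> (\<forall>n. valid_sel (sel n)) \<longrightarrow>
       (\<forall>\<^sub>F n in sequentially. even (d * n) \<longrightarrow>
          measure_pmf.prob (expl_process n d (perc_p d lam n) (sel n)) (- G_event d (Af n) B n)
            \<le> exp (- c * Af n powr (3/2)))"
      proof (rule exI[of _ c], rule conjI[OF cpos], intro allI impI)
        fix Af :: "nat \<Rightarrow> real" and sel :: "nat \<Rightarrow> expl_state list \<Rightarrow> stub"
        assume hA: "\<forall>n. Af n \<ge> A0" and hO: "Af \<in> O(\<lambda>n. real n powr (1/6))" and hs: "\<forall>n. valid_sel (sel n)"
        obtain K where K0: "K > 0" and evK: "\<forall>\<^sub>F n in sequentially. norm (Af n) \<le> K * norm (real n powr (1/6))"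
          using hO by (elim landau_o.bigE) auto
        define Z0 where "Z0 = K + 8 + 2 * real d * \<bar>lam\<bar> + B^2 * (real d)^2 * K"
        have Z0pos: "Z0 > 0" using K0 by (simp add: Z0_def add_pos_nonneg)
        have evN: "\<forall>\<^sub>F n in sequentially. n \<ge> nat \<lceil>Z0^6\<rceil> + 1" by (rule eventually_ge_at_top)
        show "\<forall>\<^sub>F n in sequentially. even (d * n) \<longrightarrow>
          measure_pmf.prob (expl_process n d (perc_p d lam n) (sel n)) (- G_event d (Af n) B n)
            \<le> exp (- c * Af n powr (3/2))"
          using evK evN
        proof eventually_elim
          case (elim n)
          have npos: "n > 0" using elim(2) by simp
          have rn: "real n \<ge> Z0^6"
          proof -
            have "real n \<ge> real (nat \<lceil>Z0^6\<rceil>)" using elim(2) by simp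
            moreover have "real (nat \<lceil>Z0^6\<rceil>) \<ge> Z0^6" by linarith
            ultimately show ?thesis by linarith
          qed
          have zb: "real n powr (1/6) \<ge> Z0"
          proof -
            have "(Z0^6) powr (1/6) \<le> real n powr (1/6)" using rn Z0pos by (intro powr_mono2) auto
            moreover have "(Z0^6) powr (1/6) = Z0"
            proof -
              have "(Z0^6) powr (1/6) = (Z0 powr (real 6)) powr (1/6)" by (simp only: powr_realpow[OF Z0pos])
              also have "\<dots> = Z0 powr (real 6 * (1/6))" by (rule powr_powr)
              also have "\<dots> = Z0" using Z0pos by simp
              finally show ?thesis .
            qed
            ultimately show ?thesis by simp
          qed
          have AK: "Af n \<le> K * real n powr (1/6)" using elim(1) by simp
          have X: "measure_pmf.prob (expl_process n d (perc_p d lam n) (sel n)) (- G_event d (Af n) B n)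
               \<le> exp (- c * Af n powr (3/2))" if ev: "even (d * n)"
          proof -
            have "measure_pmf.prob (expl_process n d (perc_p d lam n) (sel n)) (- G_event d (Af n) B n)
               \<le> exp (- (1 / (4096 * 36864 * 16 * (real d)^6)) * Af n powr (3/2))"
              by (rule final_n[OF d3 npos ev hs[rule_format] _ AK B0 _ K0])
                 (use hA zb in \<open>simp_all add: A0_def Z0_def\<close>)
            then show ?thesis by (simp add: c_def)
          qed
          then show ?case by blast
        qed
      qed
    qed
  qed
qed


end
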